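(* For every $n\ge1$, $L^{\mathrm S}_{\mathrm{RCC8}}(\mathbb R^n,\mathbb R^n_{\mathrm{rect}})$ is recursively enumerable.
   Context: $\mathbb R^n_{\mathrm{rect}}$ is the set of closed hyper-rectangles $\prod_{i=1}^n C_i$ with each $C_i$ a non-singleton closed interval of $\mathbb R$. The structure $\mathfrak R(\mathbb R^n,\mathbb R^n_{\mathrm{rect}})$ has domain $\mathbb R^n_{\mathrm{rect}}$ and the eight RCC8 relations w.r.t. the Euclidean interior $\mathbb I$: $\mathrm{dc}$: $s\cap t=\emptyset$; $\mathrm{ec}$: $\mathbb Is\cap\mathbb It=\emptyset\neq s\cap t$; $\mathrm{po}$: $\mathbb Is\cap\mathbb It\ne\emptyset$, $s\not\subseteq t$, $t\not\subseteq s$; $\mathrm{eq}$: $s=t$; $\mathrm{tpp}$: $s\subseteq t$, $s\not\subseteq\mathbb It$, $s\ne t$; $\mathrm{ntpp}$: $s\subseteq\mathbb It$, $s\ne t$; $\mathrm{tppi},\mathrm{ntppi}$ their inverses. $\mathcal L_{\mathrm{RCC8}}$ is the modal language over propositional variables $p_1,p_2,\dots$ with $\neg,\wedge$ and a box $[r]$ for each relation, $\mathfrak M,s\models[r]\varphi$ iff $\varphi$ holds at all $t$ with $(s,t)\in r$. $L^{\mathrm S}_{\mathrm{RCC8}}(\mathbb R^n,\mathbb R^n_{\mathrm{rect}})$ is the set of formulas true at all points of all models based on substructures (restrictions to non-empty subsets of the domain) of $\mathfrak R(\mathbb R^n,\mathbb R^n_{\mathrm{rect}})$. *)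

theory Defs
  imports "HOL-Analysis.Analysis" "HOL-Library.Nat_Bijection"
begin

definition rects :: "(real ^ 'n) set set" where
  "rects = {cbox a b | a b. \<forall>i. a $ i < b $ i}"

datatype rcc8 = DC | EC | PO | EQ | TPP | NTPP | TPPI | NTPPI

fun rcc8_rel :: "rcc8 \<Rightarrow> 'a::topological_space set \<Rightarrow> 'a set \<Rightarrow> bool" where
  "rcc8_rel DC s t = (s \<inter> t = {})"
| "rcc8_rel EC s t = (interior s \<inter> interior t = {} \<and> s \<inter> t \<noteq> {})"
| "rcc8_rel PO s t = (interior s \<inter> interior t \<noteq> {} \<and> \<not> s \<subseteq> t \<and> \<not> t \<subseteq> s)"
| "rcc8_rel EQ s t = (s = t)"
| "rcc8_rel TPP s t = (s \<subseteq> t \<and> \<not> s \<subseteq> interior t \<and> s \<noteq> t)"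
| "rcc8_rel NTPP s t = (s \<subseteq> interior t \<and> s \<noteq> t)"
| "rcc8_rel TPPI s t = (t \<subseteq> s \<and> \<not> t \<subseteq> interior s \<and> t \<noteq> s)"
| "rcc8_rel NTPPI s t = (t \<subseteq> interior s \<and> t \<noteq> s)"

datatype fm = PVar nat | Neg fm | Conj fm fm | Box rcc8 fm

fun sat :: "'a::topological_space set set \<Rightarrow> (nat \<Rightarrow> 'a set set) \<Rightarrow> 'a set \<Rightarrow> fm \<Rightarrow> bool" where
  "sat W V s (PVar k) = (s \<in> V k)"
| "sat W V s (Neg \<phi>) = (\<not> sat W V s \<phi>)"
| "sat W V s (Conj \<phi> \<psi>) = (sat W V s \<phi> \<and> sat W V s \<psi>)"
| "sat W V s (Box r \<phi>) = (\<forall>t\<in>W. rcc8_rel r s t \<longrightarrow> sat W V t \<phi>)"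

text \<open>Logic of all substructures (non-empty subsets W of the domain) of the
  structure of rectangles: formulas true at all points of all models on such W.\<close>
definition logic_S_rect :: "'n::finite itself \<Rightarrow> fm set" where
  "logic_S_rect _ = {\<phi>. \<forall>W :: (real ^ 'n) set set. W \<noteq> {} \<longrightarrow> W \<subseteq> rects \<longrightarrow>
       (\<forall>V. \<forall>s\<in>W. sat W V s \<phi>)}"

fun code_rel :: "rcc8 \<Rightarrow> nat" where
  "code_rel DC = 0" | "code_rel EC = 1" | "code_rel PO = 2" | "code_rel EQ = 3"
| "code_rel TPP = 4" | "code_rel NTPP = 5" | "code_rel TPPI = 6" | "code_rel NTPPI = 7"

fun code_fm :: "fm \<Rightarrow> nat" where
  "code_fm (PVar k) = prod_encode (0, k)"
| "code_fm (Neg \<phi>) = prod_encode (1, code_fm \<phi>)"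
| "code_fm (Conj \<phi> \<psi>) = prod_encode (2, prod_encode (code_fm \<phi>, code_fm \<psi>))"
| "code_fm (Box r \<phi>) = prod_encode (3 + code_rel r, code_fm \<phi>)"

datatype recf = Zero | Succ | Proj nat | Comp recf "recf list" | Prec recf recf | Mn recf

inductive eval :: "recf \<Rightarrow> nat list \<Rightarrow> nat \<Rightarrow> bool" where
  "eval Zero xs 0"
| "eval Succ (x # xs) (Suc x)"
| "i < length xs \<Longrightarrow> eval (Proj i) xs (xs ! i)"
| "list_all2 (\<lambda>g y. eval g xs y) gs ys \<Longrightarrow> eval f ys z \<Longrightarrow> eval (Comp f gs) xs z"
| "eval f xs z \<Longrightarrow> eval (Prec f g) (0 # xs) z"
| "eval (Prec f g) (n # xs) r \<Longrightarrow> eval g (n # r # xs) z \<Longrightarrow> eval (Prec f g) (Suc n # xs) z"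
| "eval f (n # xs) 0 \<Longrightarrow> (\<forall>m<n. \<exists>k. eval f (m # xs) (Suc k)) \<Longrightarrow> eval (Mn f) xs n"

definition re_set :: "nat set \<Rightarrow> bool" where
  "re_set A \<longleftrightarrow> (\<exists>f. \<forall>x. x \<in> A \<longleftrightarrow> (\<exists>y. eval f [x] y))"

definition re_fmset :: "fm set \<Rightarrow> bool" where
  "re_fmset S \<longleftrightarrow> re_set (code_fm ` S)"

end

theory Submission
  imports Defs
begin


definition rfn :: "nat \<Rightarrow> (nat list \<Rightarrow> nat) \<Rightarrow> bool" where
  "rfn k F \<longleftrightarrow> (\<exists>f. \<forall>xs. length xs = k \<longrightarrow> eval f xs (F xs))"

inductive_cases evZ: "eval Zero xs z"
inductive_cases evS: "eval Succ xs z"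
inductive_cases evP: "eval (Proj i) xs z"
inductive_cases evC: "eval (Comp f gs) xs z"
inductive_cases evR: "eval (Prec f g) xs z"
inductive_cases evM: "eval (Mn f) xs z"

lemma list_all2_det:
  assumes "list_all2 (\<lambda>g y. eval g xs y \<and> (\<forall>z'. eval g xs z' \<longrightarrow> z' = y)) gs ys"
    and "list_all2 (\<lambda>g y. eval g xs y) gs ys'"
  shows "ys' = ys"
  using assms
proof (induction gs arbitrary: ys ys')
  case Nil then show ?case by simp
next
  case (Cons g gs)
  from Cons.prems(1) obtain y yr where y: "ys = y # yr" "eval g xs y \<and> (\<forall>z'. eval g xs z' \<longrightarrow> z' = y)"
    "list_all2 (\<lambda>g y. eval g xs y \<and> (\<forall>z'. eval g xs z' \<longrightarrow> z' = y)) gs yr"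
    by (cases ys) simp_all
  from Cons.prems(2) obtain y' yr' where y': "ys' = y' # yr'" "eval g xs y'" "list_all2 (\<lambda>g y. eval g xs y) gs yr'"
    by (cases ys') simp_all
  have "yr' = yr" using Cons.IH[OF y(3) y'(3)] .
  moreover have "y' = y" using y(2) y'(2) by blast
  ultimately show ?case using y(1) y'(1) by simp
qed

lemma eval_det0: "eval f xs z \<Longrightarrow> \<forall>z'. eval f xs z' \<longrightarrow> z' = z"
proof (induction rule: eval.induct)
  case (1 xs) show ?case by (blast elim: evZ)
next
  case (2 x xs) show ?case by (blast elim: evS)
next
  case (3 i xs) show ?case by (blast elim: evP)
next
  case (4 xs gs ys f z)
  show ?case
  proof (intro allI impI)
    fix z' assume "eval (Comp f gs) xs z'"
    then obtain ys' where a: "list_all2 (\<lambda>g y. eval g xs y) gs ys'" and b: "eval f ys' z'"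
      by (rule evC)
    have "ys' = ys" by (rule list_all2_det[OF 4(1) a])
    with b 4 show "z' = z" by blast
  qed
next
  case (5 f xs z g)
  show ?case
  proof (intro allI impI)
    fix z' assume "eval (Prec f g) (0 # xs) z'"
    then have "eval f xs z'" by (rule evR) simp_all
    with 5(2) show "z' = z" by blast
  qed
next
  case (6 f g n xs r z)
  show ?case
  proof (intro allI impI)
    fix z' assume asm: "eval (Prec f g) (Suc n # xs) z'"
    obtain r' where "eval (Prec f g) (n # xs) r'" "eval g (n # r' # xs) z'"
    proof (rule evR[OF asm])
      fix xs' assume "Suc n # xs = 0 # xs'" then show ?thesis by simp
    next
      fix n' xs' r' assume h: "Suc n # xs = Suc n' # xs'" "eval (Prec f g) (n' # xs') r'" "eval g (n' # r' # xs') z'"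
        and t: "\<And>r'. eval (Prec f g) (n # xs) r' \<Longrightarrow> eval g (n # r' # xs) z' \<Longrightarrow> ?thesis"
      from h(1) have "n' = n" "xs' = xs" by simp_all
      with h(2,3) show ?thesis by (intro t) simp_all
    qed
    note r = this
    have ih1: "\<forall>z'. eval (Prec f g) (n # xs) z' \<longrightarrow> z' = r" using 6 by blast
    have ih2: "\<forall>z'. eval g (n # r # xs) z' \<longrightarrow> z' = z" using 6 by blast
    from ih1 r(1) have "r' = r" by blast
    with ih2 r(2) show "z' = z" by blast
  qed
next
  case (7 f n xs)
  note ih0 = 7(2) and ihm = 7(3)
  show ?case
  proof (intro allI impI)
    fix z' assume asm: "eval (Mn f) xs z'"
    have "eval f (z' # xs) 0 \<and> (\<forall>m<z'. \<exists>k. eval f (m # xs) (Suc k))"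
      by (rule evM[OF asm]) (rule conjI)
    then have e1: "eval f (z' # xs) 0" and e2: "\<forall>m<z'. \<exists>k. eval f (m # xs) (Suc k)" by blast+
    show "z' = n"
    proof (rule ccontr)
      assume "z' \<noteq> n"
      then consider "n < z'" | "z' < n" by linarith
      then show False
      proof cases
        case 1
        from e2 1 obtain k where "eval f (n # xs) (Suc k)" by blast
        with ih0 have "Suc k = 0" by blast
        then show False by simp
      next
        case 2
        from ihm 2 obtain k where "\<forall>z''. eval f (z' # xs) z'' \<longrightarrow> z'' = Suc k" by blast
        with e1 have "0 = Suc k" by blast
        then show False by simp
      qed
    qed
  qed
qed

lemma eval_det: "eval f xs z \<Longrightarrow> eval f xs z' \<Longrightarrow> z' = z"
  using eval_det0 by blast

lemma rfn_cong: "rfn k F \<Longrightarrow> (\<And>xs. length xs = k \<Longrightarrow> F xs = G xs) \<Longrightarrow> rfn k G"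
  unfolding rfn_def by metis

fun constf :: "nat \<Rightarrow> recf" where
  "constf 0 = Zero"
| "constf (Suc c) = Comp Succ [constf c]"

lemma eval_constf: "eval (constf c) xs c"
proof (induction c)
  case 0 then show ?case by (simp add: eval.intros)
next
  case (Suc c)
  have "eval Succ [c] (Suc c)" by (rule eval.intros)
  then show ?case using Suc by (auto intro!: eval.intros)
qed

lemma rfn_const[intro!]: "rfn k (\<lambda>xs. c)"
  unfolding rfn_def using eval_constf by blast

lemma rfn_proj: "i < k \<Longrightarrow> rfn k (\<lambda>xs. xs ! i)"
  unfolding rfn_def by (metis eval.intros(3))

lemma rfn_succ1: "rfn 1 (\<lambda>xs. Suc (xs ! 0))"
  unfolding rfn_def
proof (intro exI allI impI)
  fix xs :: "nat list" assume "length xs = 1"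
  then obtain x where "xs = [x]" by (cases xs) auto
  then show "eval Succ xs (Suc (xs ! 0))" by (auto intro: eval.intros)
qed

lemma list_choice: "\<forall>F\<in>set Fs. \<exists>f. P F f \<Longrightarrow> \<exists>fs. list_all2 P Fs fs"
proof (induction Fs)
  case Nil then show ?case by auto
next
  case (Cons F Fs)
  then obtain f fs where "P F f" "list_all2 P Fs fs" by auto
  then show ?case by (intro exI[of _ "f # fs"]) auto
qed

lemma rfn_comp:
  assumes "rfn m G" "length Fs = m" "\<forall>F\<in>set Fs. rfn k F"
  shows "rfn k (\<lambda>xs. G (map (\<lambda>F. F xs) Fs))"
proof -
  obtain g where g: "\<forall>xs. length xs = m \<longrightarrow> eval g xs (G xs)" using assms(1) unfolding rfn_def by blast
  obtain fs where fs: "list_all2 (\<lambda>F f. \<forall>xs. length xs = k \<longrightarrow> eval f xs (F xs)) Fs fs"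
    using list_choice[of Fs "\<lambda>F f. \<forall>xs. length xs = k \<longrightarrow> eval f xs (F xs)"] assms(3)
    unfolding rfn_def by blast
  have "eval (Comp g fs) xs (G (map (\<lambda>F. F xs) Fs))" if "length xs = k" for xs
  proof (rule eval.intros(4))
    show "list_all2 (\<lambda>g y. eval g xs y) fs (map (\<lambda>F. F xs) Fs)"
      using fs that by (induction rule: list_all2_induct) auto
    show "eval g (map (\<lambda>F. F xs) Fs) (G (map (\<lambda>F. F xs) Fs))"
      using g assms(2) by auto
  qed
  then show ?thesis unfolding rfn_def by blast
qed

lemma rfn_comp1: "rfn 1 G \<Longrightarrow> rfn k F \<Longrightarrow> rfn k (\<lambda>xs. G [F xs])"
  using rfn_comp[of 1 G "[F]" k] by simp

lemma rfn_comp2: "rfn 2 G \<Longrightarrow> rfn k F1 \<Longrightarrow> rfn k F2 \<Longrightarrow> rfn k (\<lambda>xs. G [F1 xs, F2 xs])"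
  using rfn_comp[of 2 G "[F1, F2]" k] by simp

lemma rfn_comp3: "rfn 3 G \<Longrightarrow> rfn k F1 \<Longrightarrow> rfn k F2 \<Longrightarrow> rfn k F3 \<Longrightarrow> rfn k (\<lambda>xs. G [F1 xs, F2 xs, F3 xs])"
  using rfn_comp[of 3 G "[F1, F2, F3]" k] by (simp add: numeral_3_eq_3)

lemma rfn_prec:
  assumes "rfn k G" "rfn (Suc (Suc k)) H"
  shows "rfn (Suc k) (\<lambda>xs. rec_nat (G (tl xs)) (\<lambda>n r. H (n # r # tl xs)) (hd xs))"
proof -
  obtain g where g: "\<forall>xs. length xs = k \<longrightarrow> eval g xs (G xs)" using assms(1) unfolding rfn_def by blast
  obtain h where h: "\<forall>xs. length xs = Suc (Suc k) \<longrightarrow> eval h xs (H xs)" using assms(2) unfolding rfn_def by blast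
  have "eval (Prec g h) (n # ys) (rec_nat (G ys) (\<lambda>n r. H (n # r # ys)) n)" if "length ys = k" for n ys
  proof (induction n)
    case 0 then show ?case using g that by (auto intro: eval.intros)
  next
    case (Suc n) then show ?case using h that by (auto intro: eval.intros(6))
  qed
  then have "eval (Prec g h) xs (rec_nat (G (tl xs)) (\<lambda>n r. H (n # r # tl xs)) (hd xs))"
    if "length xs = Suc k" for xs
    using that by (cases xs) auto
  then show ?thesis unfolding rfn_def by blast
qed

lemma rfn_var[intro]: "i < k \<Longrightarrow> rfn k (\<lambda>xs. xs ! i)"
  by (rule rfn_proj)

lemma rfn2_add: "rfn 2 (\<lambda>xs. xs ! 0 + xs ! 1)"
proof -
  have "rfn 2 (\<lambda>xs. rec_nat ((tl xs) ! 0) (\<lambda>n r. Suc r) (hd xs))"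
  proof -
    have a: "rfn 1 (\<lambda>xs. xs ! 0)" by (rule rfn_proj) simp
    have b: "rfn 3 (\<lambda>xs. Suc ((xs ! 1)))"
      using rfn_comp1[OF rfn_succ1, of 3 "\<lambda>xs. xs ! 1"] rfn_proj[of 1 3] by simp
    show ?thesis using rfn_prec[OF a, of "\<lambda>xs. Suc (xs ! 1)"] b by (simp add: numeral_3_eq_3 numeral_2_eq_2)
  qed
  then show ?thesis
  proof (rule rfn_cong)
    fix xs :: "nat list" assume "length xs = 2"
    then obtain a b where "xs = [a, b]" by (cases xs; cases "tl xs") (auto simp: numeral_2_eq_2)
    then show "rec_nat (tl xs ! 0) (\<lambda>n r. Suc r) (hd xs) = xs ! 0 + xs ! 1"
      by (induction a arbitrary: xs) auto
  qed
qed

lemma len2E: "length xs = 2 \<Longrightarrow> (\<And>a b. xs = [a, b] \<Longrightarrow> P) \<Longrightarrow> P"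
  by (cases xs; cases "tl xs") (auto simp: numeral_2_eq_2)

lemma len3E: "length xs = 3 \<Longrightarrow> (\<And>a b c. xs = [a, b, c] \<Longrightarrow> P) \<Longrightarrow> P"
  by (cases xs; cases "tl xs"; cases "tl (tl xs)") (auto simp: numeral_3_eq_3)

lemma rfn_rec2:
  assumes "rfn 1 G" "rfn 3 H"
  shows "rfn 2 (\<lambda>xs. rec_nat (G [xs ! 1]) (\<lambda>n r. H [n, r, xs ! 1]) (xs ! 0))"
proof -
  have "rfn (Suc 1) (\<lambda>xs. rec_nat (G (tl xs)) (\<lambda>n r. H (n # r # tl xs)) (hd xs))"
    by (rule rfn_prec) (use assms in \<open>simp_all add: numeral_3_eq_3\<close>)
  then have "rfn 2 (\<lambda>xs. rec_nat (G (tl xs)) (\<lambda>n r. H (n # r # tl xs)) (hd xs))"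
    unfolding Suc_1 .
  then show ?thesis
    by (rule rfn_cong) (auto elim!: len2E)
qed

lemma rfn_rec1:
  assumes "rfn 2 H"
  shows "rfn 1 (\<lambda>xs. rec_nat c (\<lambda>n r. H [n, r]) (xs ! 0))"
proof -
  have "rfn (Suc 0) (\<lambda>xs. rec_nat ((\<lambda>_. c) (tl xs)) (\<lambda>n r. H (n # r # tl xs)) (hd xs))"
    by (rule rfn_prec) (use assms in \<open>simp_all add: numeral_2_eq_2 rfn_const\<close>)
  then have "rfn 1 (\<lambda>xs. rec_nat ((\<lambda>_. c) (tl xs)) (\<lambda>n r. H (n # r # tl xs)) (hd xs))"
    by (simp only: One_nat_def)
  then show ?thesis
    by (rule rfn_cong) (auto simp: length_Suc_conv)
qed

lemma rfn_plus[intro]: "rfn k F \<Longrightarrow> rfn k G \<Longrightarrow> rfn k (\<lambda>xs. F xs + G xs)"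
  using rfn_comp2[OF rfn2_add] by simp

lemma rfn_Suc[intro]: "rfn k F \<Longrightarrow> rfn k (\<lambda>xs. Suc (F xs))"
  using rfn_comp1[OF rfn_succ1] by simp

lemma rec_nat_pred: "rec_nat 0 (\<lambda>n r. n) y = y - Suc 0"
  by (cases y) auto

lemma rfn2_pred: "rfn 1 (\<lambda>xs. xs ! 0 - 1)"
proof -
  have "rfn 1 (\<lambda>xs. rec_nat 0 (\<lambda>n r. [n, r] ! 0) (xs ! 0))"
    by (rule rfn_rec1) (rule rfn_proj, simp)
  then show ?thesis by (rule rfn_cong) (auto simp: length_Suc_conv simp: rec_nat_pred)
qed

lemma rfn_pred[intro]: "rfn k F \<Longrightarrow> rfn k (\<lambda>xs. F xs - 1)"
  using rfn_comp1[OF rfn2_pred] by simp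

lemma rfn2_minus: "rfn 2 (\<lambda>xs. xs ! 0 - xs ! 1)"
proof -
  have "rfn 2 (\<lambda>xs. rec_nat ([xs ! 1] ! 0) (\<lambda>n r. [n, r, xs ! 1] ! 1 - 1) (xs ! 0))"
    by (rule rfn_rec2; intro rfn_pred rfn_proj; simp)
  then have a: "rfn 2 (\<lambda>xs. xs ! 1 - xs ! 0)"
  proof (rule rfn_cong)
    fix xs :: "nat list" assume "length xs = 2"
    then obtain a b where "xs = [a,b]" by (rule len2E)
    then show "rec_nat ([xs ! 1] ! 0) (\<lambda>n r. [n, r, xs ! 1] ! 1 - 1) (xs ! 0) = xs ! 1 - xs ! 0"
      by (induction a arbitrary: xs) auto
  qed
  have "rfn 2 (\<lambda>xs. (\<lambda>xs. xs ! 1 - xs ! 0) [xs ! 1, xs ! 0])"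
    by (rule rfn_comp2[OF a]) (auto intro!: rfn_proj)
  then show ?thesis by simp
qed

lemma rfn_minus[intro]: "rfn k F \<Longrightarrow> rfn k G \<Longrightarrow> rfn k (\<lambda>xs. F xs - G xs)"
  using rfn_comp2[OF rfn2_minus] by simp

lemma rfn2_mult: "rfn 2 (\<lambda>xs. xs ! 0 * xs ! 1)"
proof -
  have "rfn 2 (\<lambda>xs. rec_nat ((\<lambda>_. 0) [xs ! 1]) (\<lambda>n r. (\<lambda>zs. zs ! 1 + zs ! 2) [n, r, xs ! 1]) (xs ! 0))"
    by (rule rfn_rec2) (auto intro!: rfn_proj)
  then show ?thesis
  proof (rule rfn_cong)
    fix xs :: "nat list" assume "length xs = 2"
    then obtain a b where "xs = [a,b]" by (rule len2E)
    then show "rec_nat ((\<lambda>_. 0) [xs ! 1]) (\<lambda>n r. (\<lambda>zs. zs ! 1 + zs ! 2) [n, r, xs ! 1]) (xs ! 0) = xs ! 0 * xs ! 1"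
      by (induction a arbitrary: xs) auto
  qed
qed

lemma rfn_mult[intro]: "rfn k F \<Longrightarrow> rfn k G \<Longrightarrow> rfn k (\<lambda>xs. F xs * G xs)"
  using rfn_comp2[OF rfn2_mult] by simp

lemma rfn2_power: "rfn 2 (\<lambda>xs. xs ! 1 ^ xs ! 0)"
proof -
  have "rfn 2 (\<lambda>xs. rec_nat ((\<lambda>_. 1) [xs ! 1]) (\<lambda>n r. (\<lambda>zs. zs ! 1 * zs ! 2) [n, r, xs ! 1]) (xs ! 0))"
    by (rule rfn_rec2) (auto intro!: rfn_proj)
  then show ?thesis
  proof (rule rfn_cong)
    fix xs :: "nat list" assume "length xs = 2"
    then obtain a b where "xs = [a,b]" by (rule len2E)
    then show "rec_nat ((\<lambda>_. 1) [xs ! 1]) (\<lambda>n r. (\<lambda>zs. zs ! 1 * zs ! 2) [n, r, xs ! 1]) (xs ! 0) = xs ! 1 ^ xs ! 0"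
      by (induction a arbitrary: xs) auto
  qed
qed

lemma rfn_power[intro]: "rfn k F \<Longrightarrow> rfn k G \<Longrightarrow> rfn k (\<lambda>xs. F xs ^ G xs)"
  using rfn_comp2[OF rfn2_power, of k G F] by simp

definition rpn :: "nat \<Rightarrow> (nat list \<Rightarrow> bool) \<Rightarrow> bool" where
  "rpn k P \<longleftrightarrow> rfn k (\<lambda>xs. if P xs then 1 else 0)"

lemma rpn_cong: "rpn k P \<Longrightarrow> (\<And>xs. length xs = k \<Longrightarrow> P xs = Q xs) \<Longrightarrow> rpn k Q"
  unfolding rpn_def by (erule rfn_cong) simp

lemma rpn_not[intro]: "rpn k P \<Longrightarrow> rpn k (\<lambda>xs. \<not> P xs)"
  unfolding rpn_def by (rule rfn_cong[OF rfn_minus[OF rfn_const, of _ _ 1]]) auto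

lemma rpn_and[intro]: "rpn k P \<Longrightarrow> rpn k Q \<Longrightarrow> rpn k (\<lambda>xs. P xs \<and> Q xs)"
proof -
  assume "rpn k P" "rpn k Q"
  then have "rfn k (\<lambda>xs. (if P xs then 1 else 0) * (if Q xs then 1 else 0))"
    unfolding rpn_def by (rule rfn_mult)
  then show ?thesis unfolding rpn_def by (rule rfn_cong) simp
qed

lemma rpn_or[intro]: "rpn k P \<Longrightarrow> rpn k Q \<Longrightarrow> rpn k (\<lambda>xs. P xs \<or> Q xs)"
proof -
  assume "rpn k P" "rpn k Q"
  then have "rpn k (\<lambda>xs. \<not> (\<not> P xs \<and> \<not> Q xs))" by (intro rpn_not rpn_and)
  then show ?thesis by simp
qed

lemma rpn_imp[intro]: "rpn k P \<Longrightarrow> rpn k Q \<Longrightarrow> rpn k (\<lambda>xs. P xs \<longrightarrow> Q xs)"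
proof -
  assume "rpn k P" "rpn k Q"
  then have "rpn k (\<lambda>xs. \<not> P xs \<or> Q xs)" by (intro rpn_not rpn_or)
  then show ?thesis by simp
qed

lemma rpn_iff[intro]: "rpn k P \<Longrightarrow> rpn k Q \<Longrightarrow> rpn k (\<lambda>xs. P xs \<longleftrightarrow> Q xs)"
proof -
  assume "rpn k P" "rpn k Q"
  then have "rpn k (\<lambda>xs. (P xs \<longrightarrow> Q xs) \<and> (Q xs \<longrightarrow> P xs))" by (intro rpn_imp rpn_and)
  then show ?thesis by (simp add: iff_conv_conj_imp)
qed

lemma rpn_True[intro]: "rpn k (\<lambda>xs. True)" and rpn_False[intro]: "rpn k (\<lambda>xs. False)"
  unfolding rpn_def by auto

lemma rpn_le[intro]: "rfn k F \<Longrightarrow> rfn k G \<Longrightarrow> rpn k (\<lambda>xs. F xs \<le> G xs)"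
proof -
  assume "rfn k F" "rfn k G"
  then have "rfn k (\<lambda>xs. 1 - (F xs - G xs))" by (intro rfn_minus rfn_const)
  then show ?thesis unfolding rpn_def by (rule rfn_cong) auto
qed

lemma rpn_less[intro]: "rfn k F \<Longrightarrow> rfn k G \<Longrightarrow> rpn k (\<lambda>xs. F xs < G xs)"
  using rpn_le[of k "\<lambda>xs. Suc (F xs)" G] by (simp add: Suc_le_eq rfn_Suc)

lemma rpn_eq[intro]: "rfn k F \<Longrightarrow> rfn k G \<Longrightarrow> rpn k (\<lambda>xs. F xs = G xs)"
proof -
  assume "rfn k F" "rfn k G"
  then have "rpn k (\<lambda>xs. F xs \<le> G xs \<and> G xs \<le> F xs)" by (intro rpn_and rpn_le)
  then show ?thesis by (rule rpn_cong) auto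
qed

lemma rfn_if[intro]: "rpn k P \<Longrightarrow> rfn k F \<Longrightarrow> rfn k G \<Longrightarrow> rfn k (\<lambda>xs. if P xs then F xs else G xs)"
proof -
  assume a: "rpn k P" "rfn k F" "rfn k G"
  then have "rfn k (\<lambda>xs. (if P xs then 1 else 0) * F xs + (1 - (if P xs then 1 else 0)) * G xs)"
    unfolding rpn_def by (intro rfn_plus rfn_mult rfn_minus rfn_const)
  then show ?thesis by (rule rfn_cong) simp
qed

lemma div_Suc_alt: "0 < (b::nat) \<Longrightarrow> Suc m div b = (if (m div b + 1) * b \<le> Suc m then m div b + 1 else m div b)"
  by (metis Nat.add_0_right One_nat_def Suc_n_not_le_n add_Suc_right div_Suc
    less_eq_div_iff_mult_less_eq mult.commute times_div_less_eq_dividend)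

lemma div_rec: "rec_nat 0 (\<lambda>n r. if 0 < b \<and> (r + 1) * b \<le> Suc n then r + 1 else r) a = a div (b::nat)"
  by (cases "b = 0"; induction a) (auto simp: div_Suc_alt)

lemma rfn2_div: "rfn 2 (\<lambda>xs. xs ! 0 div xs ! 1)"
proof -
  have "rfn 2 (\<lambda>xs. rec_nat ((\<lambda>_. 0) [xs ! 1])
     (\<lambda>n r. (\<lambda>zs. if 0 < zs ! 2 \<and> (zs ! 1 + 1) * zs ! 2 \<le> Suc (zs ! 0) then zs ! 1 + 1 else zs ! 1) [n, r, xs ! 1]) (xs ! 0))"
    by (rule rfn_rec2; intro rfn_if rpn_and rpn_less rpn_le rfn_mult rfn_plus rfn_Suc rfn_const rfn_proj; simp)
  then show ?thesis
  proof (rule rfn_cong)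
    fix xs :: "nat list" assume "length xs = 2"
    then obtain a b where "xs = [a,b]" by (rule len2E)
    then show "rec_nat ((\<lambda>_. 0) [xs ! 1])
     (\<lambda>n r. (\<lambda>zs. if 0 < zs ! 2 \<and> (zs ! 1 + 1) * zs ! 2 \<le> Suc (zs ! 0) then zs ! 1 + 1 else zs ! 1) [n, r, xs ! 1]) (xs ! 0)
       = xs ! 0 div xs ! 1"
      using div_rec[of b a] by (simp cong: if_cong)
  qed
qed

lemma rfn_div[intro]: "rfn k F \<Longrightarrow> rfn k G \<Longrightarrow> rfn k (\<lambda>xs. F xs div G xs)"
  using rfn_comp2[OF rfn2_div] by simp

lemma rfn_mod[intro]: "rfn k F \<Longrightarrow> rfn k G \<Longrightarrow> rfn k (\<lambda>xs. F xs mod G xs)"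
proof -
  assume "rfn k F" "rfn k G"
  then have "rfn k (\<lambda>xs. F xs - G xs * (F xs div G xs))" by (intro rfn_minus rfn_mult rfn_div)
  then show ?thesis by (rule rfn_cong) (simp add: minus_mult_div_eq_mod)
qed

lemma funpow_tl_nth: "m + i < length ys \<Longrightarrow> (tl ^^ m) ys ! i = ys ! (m + i)"
  by (induction m arbitrary: ys) (auto simp: nth_tl funpow_swap1)

lemma funpow_tl_len: "length ((tl ^^ m) ys) = length ys - m"
  by (induction m) auto

lemma funpow_tl_hd: "m < length ys \<Longrightarrow> hd ((tl ^^ m) ys) = ys ! m"
proof -
  assume a: "m < length ys"
  then have "(tl ^^ m) ys \<noteq> []" using funpow_tl_len[of m ys] by auto
  then have "hd ((tl ^^ m) ys) = (tl ^^ m) ys ! 0" by (simp add: hd_conv_nth)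
  then show ?thesis using funpow_tl_nth[of m 0 ys] a by simp
qed

lemma rfn_tl_nth: "m + i < k \<Longrightarrow> rfn k (\<lambda>ys. (tl ^^ m) ys ! i)"
  by (rule rfn_cong[OF rfn_proj[of "m + i"]]) (auto simp: funpow_tl_nth)

lemma rfn_tl_hd: "m < k \<Longrightarrow> rfn k (\<lambda>ys. hd ((tl ^^ m) ys))"
  by (rule rfn_cong[OF rfn_proj[of "m"]]) (auto simp: funpow_tl_hd)

lemma rfn_leaf_h0[intro]: "0 < k \<Longrightarrow> rfn k (\<lambda>ys. hd (ys))"
  using rfn_tl_hd[of 0 k] by (simp add: numeral_eq_Suc)

lemma rfn_leaf_h1[intro]: "Suc (0) < k \<Longrightarrow> rfn k (\<lambda>ys. hd (tl (ys)))"
  using rfn_tl_hd[of 1 k] by (simp add: numeral_eq_Suc)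

lemma rfn_leaf_n1[intro]: "Suc (i) < k \<Longrightarrow> rfn k (\<lambda>ys. (tl (ys)) ! i)"
  using rfn_tl_nth[of 1 i k] by (simp add: numeral_eq_Suc)

lemma rfn_leaf_h2[intro]: "Suc (Suc (0)) < k \<Longrightarrow> rfn k (\<lambda>ys. hd (tl (tl (ys))))"
  using rfn_tl_hd[of 2 k] by (simp add: numeral_eq_Suc)

lemma rfn_leaf_n2[intro]: "Suc (Suc (i)) < k \<Longrightarrow> rfn k (\<lambda>ys. (tl (tl (ys))) ! i)"
  using rfn_tl_nth[of 2 i k] by (simp add: numeral_eq_Suc)

lemma rfn_leaf_h3[intro]: "Suc (Suc (Suc (0))) < k \<Longrightarrow> rfn k (\<lambda>ys. hd (tl (tl (tl (ys)))))"
  using rfn_tl_hd[of 3 k] by (simp add: numeral_eq_Suc)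

lemma rfn_leaf_n3[intro]: "Suc (Suc (Suc (i))) < k \<Longrightarrow> rfn k (\<lambda>ys. (tl (tl (tl (ys)))) ! i)"
  using rfn_tl_nth[of 3 i k] by (simp add: numeral_eq_Suc)

lemma rfn_leaf_h4[intro]: "Suc (Suc (Suc (Suc (0)))) < k \<Longrightarrow> rfn k (\<lambda>ys. hd (tl (tl (tl (tl (ys))))))"
  using rfn_tl_hd[of 4 k] by (simp add: numeral_eq_Suc)

lemma rfn_leaf_n4[intro]: "Suc (Suc (Suc (Suc (i)))) < k \<Longrightarrow> rfn k (\<lambda>ys. (tl (tl (tl (tl (ys))))) ! i)"
  using rfn_tl_nth[of 4 i k] by (simp add: numeral_eq_Suc)

lemma rfn_leaf_h5[intro]: "Suc (Suc (Suc (Suc (Suc (0))))) < k \<Longrightarrow> rfn k (\<lambda>ys. hd (tl (tl (tl (tl (tl (ys)))))))"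
  using rfn_tl_hd[of 5 k] by (simp add: numeral_eq_Suc)

lemma rfn_leaf_n5[intro]: "Suc (Suc (Suc (Suc (Suc (i))))) < k \<Longrightarrow> rfn k (\<lambda>ys. (tl (tl (tl (tl (tl (ys)))))) ! i)"
  using rfn_tl_nth[of 5 i k] by (simp add: numeral_eq_Suc)

lemma rfn_leaf_h6[intro]: "Suc (Suc (Suc (Suc (Suc (Suc (0)))))) < k \<Longrightarrow> rfn k (\<lambda>ys. hd (tl (tl (tl (tl (tl (tl (ys))))))))"
  using rfn_tl_hd[of 6 k] by (simp add: numeral_eq_Suc)

lemma rfn_leaf_n6[intro]: "Suc (Suc (Suc (Suc (Suc (Suc (i)))))) < k \<Longrightarrow> rfn k (\<lambda>ys. (tl (tl (tl (tl (tl (tl (ys))))))) ! i)"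
  using rfn_tl_nth[of 6 i k] by (simp add: numeral_eq_Suc)

lemma rfn_leaf_h7[intro]: "Suc (Suc (Suc (Suc (Suc (Suc (Suc (0))))))) < k \<Longrightarrow> rfn k (\<lambda>ys. hd (tl (tl (tl (tl (tl (tl (tl (ys)))))))))"
  using rfn_tl_hd[of 7 k] by (simp add: numeral_eq_Suc)

lemma rfn_leaf_n7[intro]: "Suc (Suc (Suc (Suc (Suc (Suc (Suc (i))))))) < k \<Longrightarrow> rfn k (\<lambda>ys. (tl (tl (tl (tl (tl (tl (tl (ys)))))))) ! i)"
  using rfn_tl_nth[of 7 i k] by (simp add: numeral_eq_Suc)

lemma rfn_leaf_h8[intro]: "Suc (Suc (Suc (Suc (Suc (Suc (Suc (Suc (0)))))))) < k \<Longrightarrow> rfn k (\<lambda>ys. hd (tl (tl (tl (tl (tl (tl (tl (tl (ys))))))))))"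
  using rfn_tl_hd[of 8 k] by (simp add: numeral_eq_Suc)

lemma rfn_leaf_n8[intro]: "Suc (Suc (Suc (Suc (Suc (Suc (Suc (Suc (i)))))))) < k \<Longrightarrow> rfn k (\<lambda>ys. (tl (tl (tl (tl (tl (tl (tl (tl (ys))))))))) ! i)"
  using rfn_tl_nth[of 8 i k] by (simp add: numeral_eq_Suc)

lemma rfn_leaf_h9[intro]: "Suc (Suc (Suc (Suc (Suc (Suc (Suc (Suc (Suc (0))))))))) < k \<Longrightarrow> rfn k (\<lambda>ys. hd (tl (tl (tl (tl (tl (tl (tl (tl (tl (ys)))))))))))"
  using rfn_tl_hd[of 9 k] by (simp add: numeral_eq_Suc)

lemma rfn_leaf_n9[intro]: "Suc (Suc (Suc (Suc (Suc (Suc (Suc (Suc (Suc (i))))))))) < k \<Longrightarrow> rfn k (\<lambda>ys. (tl (tl (tl (tl (tl (tl (tl (tl (tl (ys)))))))))) ! i)"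
  using rfn_tl_nth[of 9 i k] by (simp add: numeral_eq_Suc)

lemma rfn_leaf_h10[intro]: "Suc (Suc (Suc (Suc (Suc (Suc (Suc (Suc (Suc (Suc (0)))))))))) < k \<Longrightarrow> rfn k (\<lambda>ys. hd (tl (tl (tl (tl (tl (tl (tl (tl (tl (tl (ys))))))))))))"
  using rfn_tl_hd[of 10 k] by (simp add: numeral_eq_Suc)

lemma rfn_leaf_n10[intro]: "Suc (Suc (Suc (Suc (Suc (Suc (Suc (Suc (Suc (Suc (i)))))))))) < k \<Longrightarrow> rfn k (\<lambda>ys. (tl (tl (tl (tl (tl (tl (tl (tl (tl (tl (ys))))))))))) ! i)"
  using rfn_tl_nth[of 10 i k] by (simp add: numeral_eq_Suc)

lemma rfn_leaf_h11[intro]: "Suc (Suc (Suc (Suc (Suc (Suc (Suc (Suc (Suc (Suc (Suc (0))))))))))) < k \<Longrightarrow> rfn k (\<lambda>ys. hd (tl (tl (tl (tl (tl (tl (tl (tl (tl (tl (tl (ys)))))))))))))"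
  using rfn_tl_hd[of 11 k] by (simp add: numeral_eq_Suc)

lemma rfn_leaf_n11[intro]: "Suc (Suc (Suc (Suc (Suc (Suc (Suc (Suc (Suc (Suc (Suc (i))))))))))) < k \<Longrightarrow> rfn k (\<lambda>ys. (tl (tl (tl (tl (tl (tl (tl (tl (tl (tl (tl (ys)))))))))))) ! i)"
  using rfn_tl_nth[of 11 i k] by (simp add: numeral_eq_Suc)

lemma rfn_leaf_h12[intro]: "Suc (Suc (Suc (Suc (Suc (Suc (Suc (Suc (Suc (Suc (Suc (Suc (0)))))))))))) < k \<Longrightarrow> rfn k (\<lambda>ys. hd (tl (tl (tl (tl (tl (tl (tl (tl (tl (tl (tl (tl (ys))))))))))))))"
  using rfn_tl_hd[of 12 k] by (simp add: numeral_eq_Suc)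

lemma rfn_leaf_n12[intro]: "Suc (Suc (Suc (Suc (Suc (Suc (Suc (Suc (Suc (Suc (Suc (Suc (i)))))))))))) < k \<Longrightarrow> rfn k (\<lambda>ys. (tl (tl (tl (tl (tl (tl (tl (tl (tl (tl (tl (tl (ys))))))))))))) ! i)"
  using rfn_tl_nth[of 12 i k] by (simp add: numeral_eq_Suc)

lemma rfn_leaf_h13[intro]: "Suc (Suc (Suc (Suc (Suc (Suc (Suc (Suc (Suc (Suc (Suc (Suc (Suc (0))))))))))))) < k \<Longrightarrow> rfn k (\<lambda>ys. hd (tl (tl (tl (tl (tl (tl (tl (tl (tl (tl (tl (tl (tl (ys)))))))))))))))"
  using rfn_tl_hd[of 13 k] by (simp add: numeral_eq_Suc)

lemma rfn_leaf_n13[intro]: "Suc (Suc (Suc (Suc (Suc (Suc (Suc (Suc (Suc (Suc (Suc (Suc (Suc (i))))))))))))) < k \<Longrightarrow> rfn k (\<lambda>ys. (tl (tl (tl (tl (tl (tl (tl (tl (tl (tl (tl (tl (tl (ys)))))))))))))) ! i)"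
  using rfn_tl_nth[of 13 i k] by (simp add: numeral_eq_Suc)

lemma rfn_leaf_h14[intro]: "Suc (Suc (Suc (Suc (Suc (Suc (Suc (Suc (Suc (Suc (Suc (Suc (Suc (Suc (0)))))))))))))) < k \<Longrightarrow> rfn k (\<lambda>ys. hd (tl (tl (tl (tl (tl (tl (tl (tl (tl (tl (tl (tl (tl (tl (ys))))))))))))))))"
  using rfn_tl_hd[of 14 k] by (simp add: numeral_eq_Suc)

lemma rfn_leaf_n14[intro]: "Suc (Suc (Suc (Suc (Suc (Suc (Suc (Suc (Suc (Suc (Suc (Suc (Suc (Suc (i)))))))))))))) < k \<Longrightarrow> rfn k (\<lambda>ys. (tl (tl (tl (tl (tl (tl (tl (tl (tl (tl (tl (tl (tl (tl (ys))))))))))))))) ! i)"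
  using rfn_tl_nth[of 14 i k] by (simp add: numeral_eq_Suc)

lemmas rfn_leaf = rfn_leaf_h0 rfn_leaf_h1 rfn_leaf_n1 rfn_leaf_h2 rfn_leaf_n2 rfn_leaf_h3 rfn_leaf_n3 rfn_leaf_h4 rfn_leaf_n4 rfn_leaf_h5 rfn_leaf_n5 rfn_leaf_h6 rfn_leaf_n6 rfn_leaf_h7 rfn_leaf_n7 rfn_leaf_h8 rfn_leaf_n8 rfn_leaf_h9 rfn_leaf_n9 rfn_leaf_h10 rfn_leaf_n10 rfn_leaf_h11 rfn_leaf_n11 rfn_leaf_h12 rfn_leaf_n12 rfn_leaf_h13 rfn_leaf_n13 rfn_leaf_h14 rfn_leaf_n14

lemma rfn_projs: "\<forall>F\<in>set (map (\<lambda>i xs. xs ! i) is). rfn k F" if "\<forall>i\<in>set is. i < k"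
  using that by (auto intro: rfn_proj)

lemma rfn_subst0: "rfn (Suc k) F \<Longrightarrow> rfn k B \<Longrightarrow> rfn k (\<lambda>xs. F (B xs # xs))"
proof -
  assume a: "rfn (Suc k) F" "rfn k B"
  have "rfn k (\<lambda>xs. F (map (\<lambda>G. G xs) (B # map (\<lambda>i xs. xs ! i) [0..<k])))"
    by (rule rfn_comp[OF a(1)]) (use a(2) rfn_projs[of "[0..<k]" k] in auto)
  then show ?thesis by (rule rfn_cong) (simp add: comp_def, metis map_nth)
qed

lemma map_nth_drop2: "length zs = Suc (Suc k) \<Longrightarrow> map ((!) zs) [2..<Suc (Suc k)] = drop 2 zs"
  by (rule nth_equalityI) (auto simp del: upt_Suc)

lemma rpn_ball_aux:
  assumes "rpn (Suc k) Q"
  shows "rfn (Suc k) (\<lambda>xs. if (\<forall>y<hd xs. Q (y # tl xs)) then 1 else 0)"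
proof -
  let ?q = "\<lambda>ys. if Q ys then 1 else (0::nat)"
  have q: "rfn (Suc k) ?q" using assms unfolding rpn_def .
  have h: "rfn (Suc (Suc k)) (\<lambda>zs. zs ! 1 * ?q (map (\<lambda>G. G zs) (map (\<lambda>i xs. xs ! i) (0 # [2..<Suc (Suc k)]))))"
    by (intro rfn_mult rfn_proj rfn_comp[OF q]) (auto intro: rfn_proj)
  have "rfn (Suc k) (\<lambda>xs. rec_nat ((\<lambda>_. 1) (tl xs))
      (\<lambda>n r. (\<lambda>zs. zs ! 1 * ?q (map (\<lambda>G. G zs) (map (\<lambda>i xs. xs ! i) (0 # [2..<Suc (Suc k)])))) (n # r # tl xs)) (hd xs))"
    by (rule rfn_prec[OF rfn_const h])
  then show ?thesis
  proof (rule rfn_cong)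
    fix xs :: "nat list" assume l: "length xs = Suc k"
    have m: "map ((!) (n # r # tl xs)) [2..<Suc (Suc k)] = tl xs" for n r
      using map_nth_drop2[of "n # r # tl xs" k] l by simp
    show "rec_nat ((\<lambda>_. 1) (tl xs))
      (\<lambda>n r. (\<lambda>zs. zs ! 1 * ?q (map (\<lambda>G. G zs) (map (\<lambda>i xs. xs ! i) (0 # [2..<Suc (Suc k)])))) (n # r # tl xs)) (hd xs)
      = (if (\<forall>y<hd xs. Q (y # tl xs)) then 1 else 0)"
    proof -
      have e: "map (\<lambda>G. G (n # r # tl xs)) (map (\<lambda>i xs. xs ! i) (0 # [2..<Suc (Suc k)])) = n # tl xs" for n r
        using m[of n r] by (simp add: comp_def del: upt_Suc)
      have rr: "rec_nat 1 (\<lambda>n r. r * ?q (n # ys)) mm = (if \<forall>y<mm. Q (y # ys) then 1 else 0)" for mm ys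
        by (induction mm) (auto simp: less_Suc_eq)
      show ?thesis unfolding e using rr by simp
    qed
  qed
qed

lemma rpn_ball[intro]:
  assumes "rfn k B" "rpn (Suc k) (\<lambda>ys. P (tl ys) (hd ys))"
  shows "rpn k (\<lambda>xs. \<forall>y<B xs. P xs y)"
proof -
  have "rfn (Suc k) (\<lambda>xs. if (\<forall>y<hd xs. P (tl xs) y) then 1 else 0)"
    using rpn_ball_aux[OF assms(2)] by simp
  from rfn_subst0[OF this assms(1)] show ?thesis unfolding rpn_def by simp
qed

lemma rpn_bex[intro]:
  assumes "rfn k B" "rpn (Suc k) (\<lambda>ys. P (tl ys) (hd ys))"
  shows "rpn k (\<lambda>xs. \<exists>y<B xs. P xs y)"
proof -
  have "rpn k (\<lambda>xs. \<not> (\<forall>y<B xs. \<not> P xs y))"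
    by (intro rpn_not rpn_ball assms)
  then show ?thesis by simp
qed

lemma rpn_ball_le[intro]:
  assumes "rfn k B" "rpn (Suc k) (\<lambda>ys. P (tl ys) (hd ys))"
  shows "rpn k (\<lambda>xs. \<forall>y\<le>B xs. P xs y)"
proof -
  have "rpn k (\<lambda>xs. \<forall>y<Suc (B xs). P xs y)"
    by (intro rpn_ball rfn_Suc assms)
  then show ?thesis by (simp add: less_Suc_eq_le)
qed

lemma rpn_bex_le[intro]:
  assumes "rfn k B" "rpn (Suc k) (\<lambda>ys. P (tl ys) (hd ys))"
  shows "rpn k (\<lambda>xs. \<exists>y\<le>B xs. P xs y)"
proof -
  have "rpn k (\<lambda>xs. \<exists>y<Suc (B xs). P xs y)"
    by (intro rpn_bex rfn_Suc assms)
  then show ?thesis by (simp add: less_Suc_eq_le)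
qed


lemma rfn_triangle[intro]: "rfn k F \<Longrightarrow> rfn k (\<lambda>xs. triangle (F xs))"
  unfolding triangle_def by (intro rfn_div rfn_mult rfn_Suc rfn_const)

lemma rfn_prod_encode[intro]: "rfn k F \<Longrightarrow> rfn k G \<Longrightarrow> rfn k (\<lambda>xs. prod_encode (F xs, G xs))"
  unfolding prod_encode_def by (simp, intro rfn_plus rfn_triangle)

lemmas rf_intros = rfn_const rfn_plus rfn_Suc rfn_minus rfn_mult rfn_power rfn_div rfn_mod rfn_if rfn_leaf rfn_var
  rfn_triangle rfn_prod_encode
  rpn_not rpn_and rpn_or rpn_imp rpn_iff rpn_True rpn_False rpn_le rpn_less rpn_eq rpn_ball rpn_bex rpn_ball_le rpn_bex_le


definition DEC :: "nat \<Rightarrow> (nat \<Rightarrow> nat \<Rightarrow> bool) \<Rightarrow> bool" where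
  "DEC c P \<longleftrightarrow> (\<exists>t\<le>c. \<exists>a\<le>c. c = prod_encode (t, a) \<and> P t a)"

lemma DEC_iff: "DEC c P \<longleftrightarrow> P (fst (prod_decode c)) (snd (prod_decode c))"
proof
  assume "DEC c P"
  then obtain t a where "c = prod_encode (t, a)" "P t a" unfolding DEC_def by blast
  then show "P (fst (prod_decode c)) (snd (prod_decode c))" by simp
next
  assume a: "P (fst (prod_decode c)) (snd (prod_decode c))"
  obtain t b where e: "prod_decode c = (t, b)" by fastforce
  then have c: "c = prod_encode (t, b)" by (metis prod_decode_inverse)
  show "DEC c P" unfolding DEC_def
    using a e c le_prod_encode_1[of t b] le_prod_encode_2[of b t] by auto
qed

definition relc :: "nat \<Rightarrow> nat \<Rightarrow> (nat \<Rightarrow> 'v::linorder) \<Rightarrow> (nat \<Rightarrow> 'v) \<Rightarrow> (nat \<Rightarrow> 'v) \<Rightarrow> (nat \<Rightarrow> 'v) \<Rightarrow> bool" where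
  "relc d r a b c e \<longleftrightarrow>
    (r = 0 \<and> (\<exists>j<d. b j < c j \<or> e j < a j)) \<or>
    (r = 1 \<and> (\<exists>j<d. b j \<le> c j \<or> e j \<le> a j) \<and> \<not> (\<exists>j<d. b j < c j \<or> e j < a j)) \<or>
    (r = 2 \<and> \<not> (\<exists>j<d. b j \<le> c j \<or> e j \<le> a j) \<and> \<not> (\<forall>j<d. c j \<le> a j \<and> b j \<le> e j) \<and> \<not> (\<forall>j<d. a j \<le> c j \<and> e j \<le> b j)) \<or>
    (r = 3 \<and> (\<forall>j<d. a j = c j \<and> b j = e j)) \<or>
    (r = 4 \<and> (\<forall>j<d. c j \<le> a j \<and> b j \<le> e j) \<and> \<not> (\<forall>j<d. c j < a j \<and> b j < e j) \<and> \<not> (\<forall>j<d. a j = c j \<and> b j = e j)) \<or>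
    (r = 5 \<and> (\<forall>j<d. c j < a j \<and> b j < e j) \<and> \<not> (\<forall>j<d. a j = c j \<and> b j = e j)) \<or>
    (r = 6 \<and> (\<forall>j<d. a j \<le> c j \<and> e j \<le> b j) \<and> \<not> (\<forall>j<d. a j < c j \<and> e j < b j) \<and> \<not> (\<forall>j<d. a j = c j \<and> b j = e j)) \<or>
    (r = 7 \<and> (\<forall>j<d. a j < c j \<and> e j < b j) \<and> \<not> (\<forall>j<d. a j = c j \<and> b j = e j))"

definition len :: "nat \<Rightarrow> nat \<Rightarrow> nat" where "len x N = Suc (N * Suc x)"
definition wit :: "nat \<Rightarrow> nat \<Rightarrow> nat \<Rightarrow> nat" where "wit x i c = Suc (i * Suc x + c)"

lemma wit_less: "i < N \<Longrightarrow> c \<le> x \<Longrightarrow> wit x i c < len x N"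
proof -
  assume a: "i < N" "c \<le> x"
  have "i * Suc x + c < Suc i * Suc x" using a by simp
  also have "\<dots> \<le> N * Suc x" using a by (intro mult_le_mono1) simp
  finally show ?thesis unfolding wit_def len_def by simp
qed

lemma len_mono: "N \<le> M \<Longrightarrow> len x N \<le> len x M"
  unfolding len_def using mult_le_mono1[of N M "Suc x"] by simp

lemma len_gt: "N < len x N"
  unfolding len_def by simp

definition STRC :: "nat \<Rightarrow> nat \<Rightarrow> nat \<Rightarrow> (nat \<Rightarrow> nat \<Rightarrow> 'v::linorder) \<Rightarrow> (nat \<Rightarrow> nat \<Rightarrow> bool) \<Rightarrow> bool" where
  "STRC x N d v l \<longleftrightarrow>
   (\<forall>i<len x N. \<forall>j<d. v (2*i) j < v (Suc (2*i)) j) \<and>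
   (\<forall>i<len x N. \<forall>i'<len x N. (\<forall>j<d. v (2*i) j = v (2*i') j \<and> v (Suc (2*i)) j = v (Suc (2*i')) j)
       \<longrightarrow> (\<forall>c\<le>x. l i c = l i' c)) \<and>
   (\<forall>i<len x N. \<forall>c\<le>x. DEC c (\<lambda>t a. (t = 1 \<longrightarrow> (l i c \<longleftrightarrow> \<not> l i a)) \<and>
       (t = 2 \<longrightarrow> DEC a (\<lambda>a1 a2. l i c \<longleftrightarrow> l i a1 \<and> l i a2)))) \<and>
   (\<forall>i<len x N. \<forall>i'<len x N. \<forall>c\<le>x. DEC c (\<lambda>t a. 3 \<le> t \<and> t \<le> 10 \<and> l i c \<and>
       relc d (t - 3) (\<lambda>j. v (2*i) j) (\<lambda>j. v (Suc (2*i)) j) (\<lambda>j. v (2*i') j) (\<lambda>j. v (Suc (2*i')) j)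
       \<longrightarrow> l i' a)) \<and>
   (\<forall>i<N. \<forall>c\<le>x. DEC c (\<lambda>t a. 3 \<le> t \<and> t \<le> 10 \<and> \<not> l i c \<longrightarrow>
       relc d (t - 3) (\<lambda>j. v (2*i) j) (\<lambda>j. v (Suc (2*i)) j) (\<lambda>j. v (2 * wit x i c) j) (\<lambda>j. v (Suc (2 * wit x i c)) j)
       \<and> \<not> l (wit x i c) a)) \<and>
   \<not> l 0 x"

definition ISO :: "nat \<Rightarrow> nat \<Rightarrow> nat \<Rightarrow> (nat \<Rightarrow> nat \<Rightarrow> 'v::linorder) \<Rightarrow> (nat \<Rightarrow> nat \<Rightarrow> bool)
   \<Rightarrow> (nat \<Rightarrow> nat \<Rightarrow> 'w::linorder) \<Rightarrow> (nat \<Rightarrow> nat \<Rightarrow> bool) \<Rightarrow> bool" where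
  "ISO x N d v l v' l' \<longleftrightarrow>
    (\<forall>t<2 * len x N. \<forall>t'<2 * len x N. \<forall>j<d. v t j \<le> v t' j \<longleftrightarrow> v' t j \<le> v' t' j) \<and>
    (\<forall>i<len x N. \<forall>c\<le>x. l i c = l' i c)"

lemma relc_cong:
  fixes a b c e :: "nat \<Rightarrow> 'v::linorder" and a' b' c' e' :: "nat \<Rightarrow> 'w::linorder"
  assumes "\<And>j. j < d \<Longrightarrow>
     (a j \<le> c j \<longleftrightarrow> a' j \<le> c' j) \<and> (c j \<le> a j \<longleftrightarrow> c' j \<le> a' j) \<and>
     (b j \<le> e j \<longleftrightarrow> b' j \<le> e' j) \<and> (e j \<le> b j \<longleftrightarrow> e' j \<le> b' j) \<and>
     (b j \<le> c j \<longleftrightarrow> b' j \<le> c' j) \<and> (c j \<le> b j \<longleftrightarrow> c' j \<le> b' j) \<and>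
     (e j \<le> a j \<longleftrightarrow> e' j \<le> a' j) \<and> (a j \<le> e j \<longleftrightarrow> a' j \<le> e' j)"
  shows "relc d r a b c e \<longleftrightarrow> relc d r a' b' c' e'"
proof -
  have h: "\<And>j. j < d \<Longrightarrow> (a j \<le> c j) = (a' j \<le> c' j)" "\<And>j. j < d \<Longrightarrow> (c j \<le> a j) = (c' j \<le> a' j)"
    "\<And>j. j < d \<Longrightarrow> (b j \<le> e j) = (b' j \<le> e' j)" "\<And>j. j < d \<Longrightarrow> (e j \<le> b j) = (e' j \<le> b' j)"
    "\<And>j. j < d \<Longrightarrow> (b j \<le> c j) = (b' j \<le> c' j)" "\<And>j. j < d \<Longrightarrow> (c j \<le> b j) = (c' j \<le> b' j)"
    "\<And>j. j < d \<Longrightarrow> (e j \<le> a j) = (e' j \<le> a' j)" "\<And>j. j < d \<Longrightarrow> (a j \<le> e j) = (a' j \<le> e' j)"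
    using assms by blast+
  show ?thesis
    unfolding relc_def less_le_not_le order.eq_iff[where 'a='v] order.eq_iff[where 'a='w]
    by (simp add: h cong: conj_cong)
qed

lemma pd_le1: "c \<le> x \<Longrightarrow> fst (prod_decode c) \<le> x"
  by (metis le_prod_encode_1 order_trans prod.collapse prod_decode_inverse)
lemma pd_le2: "c \<le> x \<Longrightarrow> snd (prod_decode c) \<le> x"
  by (metis le_prod_encode_2 order_trans prod.collapse prod_decode_inverse)

lemma STRC_iso:
  fixes v :: "nat \<Rightarrow> nat \<Rightarrow> 'v::linorder" and v' :: "nat \<Rightarrow> nat \<Rightarrow> 'w::linorder"
  assumes iso: "ISO x N d v l v' l'" and s: "STRC x N d v l"
  shows "STRC x N d v' l'"
proof -
  have le: "\<And>t t' j. t < 2 * len x N \<Longrightarrow> t' < 2 * len x N \<Longrightarrow> j < d \<Longrightarrow> (v t j \<le> v t' j) = (v' t j \<le> v' t' j)"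
    using iso unfolding ISO_def by blast
  have lt: "(v t j < v t' j) = (v' t j < v' t' j)" if "t < 2 * len x N" "t' < 2 * len x N" "j < d" for t t' j
    using le[OF that(2,1,3)] by (simp add: not_le[symmetric])
  have eq: "(v t j = v t' j) = (v' t j = v' t' j)" if "t < 2 * len x N" "t' < 2 * len x N" "j < d" for t t' j
    using le[OF that] le[OF that(2,1,3)] by (auto simp: order.eq_iff)
  have lab: "\<And>i c. i < len x N \<Longrightarrow> c \<le> x \<Longrightarrow> l i c = l' i c"
    using iso unfolding ISO_def by blast
  have rel: "\<And>i i' r. i < len x N \<Longrightarrow> i' < len x N \<Longrightarrow>
     relc d r (\<lambda>j. v (2*i) j) (\<lambda>j. v (Suc (2*i)) j) (\<lambda>j. v (2*i') j) (\<lambda>j. v (Suc (2*i')) j) =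
     relc d r (\<lambda>j. v' (2*i) j) (\<lambda>j. v' (Suc (2*i)) j) (\<lambda>j. v' (2*i') j) (\<lambda>j. v' (Suc (2*i')) j)"
    by (rule relc_cong) (simp add: le)
  have w: "\<And>i c. i < N \<Longrightarrow> c \<le> x \<Longrightarrow> wit x i c < len x N" by (rule wit_less)
  have N: "\<And>i. i < N \<Longrightarrow> i < len x N" using len_gt less_trans by blast
  have x0: "0 < len x N" unfolding len_def by simp
  have l0: "l 0 x = l' 0 x" using lab x0 by simp
  have pdx: "\<And>c. c \<le> x \<Longrightarrow> snd (prod_decode c) \<le> x"
    "\<And>c. c \<le> x \<Longrightarrow> fst (prod_decode (snd (prod_decode c))) \<le> x"
    "\<And>c. c \<le> x \<Longrightarrow> snd (prod_decode (snd (prod_decode c))) \<le> x"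
    using pd_le1 pd_le2 by blast+
  have tok: "\<And>i. i < len x N \<Longrightarrow> 2 * i < 2 * len x N" "\<And>i. i < len x N \<Longrightarrow> Suc (2 * i) < 2 * len x N"
    by simp_all
  from s show ?thesis unfolding STRC_def DEC_iff
  proof (elim conjE, intro conjI)
    assume "\<forall>i<len x N. \<forall>j<d. v (2 * i) j < v (Suc (2 * i)) j"
    then show "\<forall>i<len x N. \<forall>j<d. v' (2 * i) j < v' (Suc (2 * i)) j"
      using lt tok by blast
  next
    assume a: "\<forall>i<len x N. \<forall>i'<len x N. (\<forall>j<d. v (2 * i) j = v (2 * i') j \<and> v (Suc (2 * i)) j = v (Suc (2 * i')) j) \<longrightarrow>
        (\<forall>c\<le>x. l i c = l i' c)"
    show "\<forall>i<len x N. \<forall>i'<len x N. (\<forall>j<d. v' (2 * i) j = v' (2 * i') j \<and> v' (Suc (2 * i)) j = v' (Suc (2 * i')) j) \<longrightarrow>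
        (\<forall>c\<le>x. l' i c = l' i' c)"
    proof (intro allI impI)
      fix i i' c assume h: "i < len x N" "i' < len x N" "\<forall>j<d. v' (2 * i) j = v' (2 * i') j \<and> v' (Suc (2 * i)) j = v' (Suc (2 * i')) j" "c \<le> x"
      then have "\<forall>j<d. v (2 * i) j = v (2 * i') j \<and> v (Suc (2 * i)) j = v (Suc (2 * i')) j"
        using eq tok by blast
      then have "l i c = l i' c" using a h by blast
      then show "l' i c = l' i' c" using lab h by metis
    qed
  next
    assume a: "\<forall>i<len x N. \<forall>c\<le>x. (fst (prod_decode c) = 1 \<longrightarrow> l i c = (\<not> l i (snd (prod_decode c)))) \<and>
        (fst (prod_decode c) = 2 \<longrightarrow> l i c = (l i (fst (prod_decode (snd (prod_decode c)))) \<and> l i (snd (prod_decode (snd (prod_decode c))))))"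
    show "\<forall>i<len x N. \<forall>c\<le>x. (fst (prod_decode c) = 1 \<longrightarrow> l' i c = (\<not> l' i (snd (prod_decode c)))) \<and>
        (fst (prod_decode c) = 2 \<longrightarrow> l' i c = (l' i (fst (prod_decode (snd (prod_decode c)))) \<and> l' i (snd (prod_decode (snd (prod_decode c))))))"
    proof (intro allI impI)
      fix i c assume h: "i < len x N" "c \<le> x"
      have e: "l' i c = l i c" "l' i (snd (prod_decode c)) = l i (snd (prod_decode c))"
        "l' i (fst (prod_decode (snd (prod_decode c)))) = l i (fst (prod_decode (snd (prod_decode c))))"
        "l' i (snd (prod_decode (snd (prod_decode c)))) = l i (snd (prod_decode (snd (prod_decode c))))"
        using lab h pdx by (metis)+
      show "(fst (prod_decode c) = 1 \<longrightarrow> l' i c = (\<not> l' i (snd (prod_decode c)))) \<and>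
        (fst (prod_decode c) = 2 \<longrightarrow> l' i c = (l' i (fst (prod_decode (snd (prod_decode c)))) \<and> l' i (snd (prod_decode (snd (prod_decode c))))))"
        unfolding e using a h by blast
    qed
  next
    assume a: "\<forall>i<len x N. \<forall>i'<len x N. \<forall>c\<le>x. 3 \<le> fst (prod_decode c) \<and> fst (prod_decode c) \<le> 10 \<and> l i c \<and>
      relc d (fst (prod_decode c) - 3) (\<lambda>j. v (2 * i) j) (\<lambda>j. v (Suc (2 * i)) j) (\<lambda>j. v (2 * i') j) (\<lambda>j. v (Suc (2 * i')) j) \<longrightarrow>
      l i' (snd (prod_decode c))"
    show "\<forall>i<len x N. \<forall>i'<len x N. \<forall>c\<le>x. 3 \<le> fst (prod_decode c) \<and> fst (prod_decode c) \<le> 10 \<and> l' i c \<and>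
      relc d (fst (prod_decode c) - 3) (\<lambda>j. v' (2 * i) j) (\<lambda>j. v' (Suc (2 * i)) j) (\<lambda>j. v' (2 * i') j) (\<lambda>j. v' (Suc (2 * i')) j) \<longrightarrow>
      l' i' (snd (prod_decode c))"
    proof (intro allI impI)
      fix i i' c assume h: "i < len x N" "i' < len x N" "c \<le> x"
        "3 \<le> fst (prod_decode c) \<and> fst (prod_decode c) \<le> 10 \<and> l' i c \<and>
      relc d (fst (prod_decode c) - 3) (\<lambda>j. v' (2 * i) j) (\<lambda>j. v' (Suc (2 * i)) j) (\<lambda>j. v' (2 * i') j) (\<lambda>j. v' (Suc (2 * i')) j)"
      have "l i c" using h lab by metis
      moreover have "relc d (fst (prod_decode c) - 3) (\<lambda>j. v (2 * i) j) (\<lambda>j. v (Suc (2 * i)) j) (\<lambda>j. v (2 * i') j) (\<lambda>j. v (Suc (2 * i')) j)"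
        using rel[OF h(1,2)] h(4) by simp
      ultimately have "l i' (snd (prod_decode c))" using a h by blast
      then show "l' i' (snd (prod_decode c))" using lab h pdx by metis
    qed
  next
    assume a: "\<forall>i<N. \<forall>c\<le>x. 3 \<le> fst (prod_decode c) \<and> fst (prod_decode c) \<le> 10 \<and> \<not> l i c \<longrightarrow>
       relc d (fst (prod_decode c) - 3) (\<lambda>j. v (2 * i) j) (\<lambda>j. v (Suc (2 * i)) j) (\<lambda>j. v (2 * wit x i c) j) (\<lambda>j. v (Suc (2 * wit x i c)) j) \<and>
       \<not> l (wit x i c) (snd (prod_decode c))"
    show "\<forall>i<N. \<forall>c\<le>x. 3 \<le> fst (prod_decode c) \<and> fst (prod_decode c) \<le> 10 \<and> \<not> l' i c \<longrightarrow>
       relc d (fst (prod_decode c) - 3) (\<lambda>j. v' (2 * i) j) (\<lambda>j. v' (Suc (2 * i)) j) (\<lambda>j. v' (2 * wit x i c) j) (\<lambda>j. v' (Suc (2 * wit x i c)) j) \<and>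
       \<not> l' (wit x i c) (snd (prod_decode c))"
    proof (intro allI impI)
      fix i c assume h: "i < N" "c \<le> x" "3 \<le> fst (prod_decode c) \<and> fst (prod_decode c) \<le> 10 \<and> \<not> l' i c"
      have iN: "i < len x N" using N h by blast
      have wN: "wit x i c < len x N" using w h by blast
      have "\<not> l i c" using h lab iN by metis
      then have r: "relc d (fst (prod_decode c) - 3) (\<lambda>j. v (2 * i) j) (\<lambda>j. v (Suc (2 * i)) j) (\<lambda>j. v (2 * wit x i c) j) (\<lambda>j. v (Suc (2 * wit x i c)) j) \<and>
       \<not> l (wit x i c) (snd (prod_decode c))" using a h by blast
      show "relc d (fst (prod_decode c) - 3) (\<lambda>j. v' (2 * i) j) (\<lambda>j. v' (Suc (2 * i)) j) (\<lambda>j. v' (2 * wit x i c) j) (\<lambda>j. v' (Suc (2 * wit x i c)) j) \<and>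
       \<not> l' (wit x i c) (snd (prod_decode c))"
        using r rel[OF iN wN] lab[OF wN pdx(1)[OF h(2)]] by simp
    qed
  next
    assume "\<not> l 0 x" then show "\<not> l' 0 x" using l0 by simp
  qed
qed

lemma STRC_mono: assumes "STRC x M d v l" "N \<le> M" shows "STRC x N d v l"
proof -
  have l: "len x N \<le> len x M" using assms(2) by (rule len_mono)
  show ?thesis using assms(1) unfolding STRC_def
    apply (elim conjE, intro conjI)
    using l assms(2) by (meson less_le_trans)+
qed

lemma ISO_sym: "ISO x N d v l v' l' \<Longrightarrow> ISO x N d v' l' v l"
  unfolding ISO_def by metis

lemma ISO_trans: "ISO x N d v l v' l' \<Longrightarrow> ISO x N d v' l' v'' l'' \<Longrightarrow> ISO x N d v l v'' l''"
  unfolding ISO_def by metis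

lemma ISO_mono: "ISO x M d v l v' l' \<Longrightarrow> N \<le> M \<Longrightarrow> ISO x N d v l v' l'"
  unfolding ISO_def using len_mono[of N M x] by (meson less_le_trans mult_le_mono2)


lemma digits:
  fixes B :: nat
  assumes "\<forall>k<m. f k < B"
  shows "(\<Sum>k<m. f k * B ^ k) < B ^ m \<and> (\<forall>k<m. (\<Sum>k<m. f k * B ^ k) div B ^ k mod B = f k)"
  using assms
proof (induction m)
  case 0 then show ?case by simp
next
  case (Suc m)
  let ?y = "\<Sum>k<m. f k * B ^ k"
  have ih: "?y < B ^ m" "\<forall>k<m. ?y div B ^ k mod B = f k" using Suc by auto
  have fm: "f m < B" using Suc by auto
  then have B0: "0 < B" by simp
  have s: "(\<Sum>k<Suc m. f k * B ^ k) = ?y + f m * B ^ m" by simp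
  have "?y + f m * B ^ m < B ^ m + f m * B ^ m" using ih by simp
  also have "\<dots> = Suc (f m) * B ^ m" by simp
  also have "\<dots> \<le> B * B ^ m" using fm by (intro mult_le_mono1) simp
  finally have lt: "?y + f m * B ^ m < B ^ Suc m" by simp
  have dig: "(?y + f m * B ^ m) div B ^ k mod B = f k" if k: "k < Suc m" for k
  proof (cases "k = m")
    case True
    have "(?y + f m * B ^ m) div B ^ m = f m" using ih(1) B0 by (simp add: div_add1_eq)
    then show ?thesis using True fm by simp
  next
    case False
    then have km: "k < m" using k by simp
    have "B ^ m = B ^ k * B ^ (m - k)" using km by (simp add: power_add[symmetric])
    then have "(?y + f m * B ^ m) div B ^ k = ?y div B ^ k + f m * B ^ (m - k)"
      using B0 by (simp add: div_add1_eq mult.assoc[symmetric] mult.commute[of "f m"])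
    moreover have "B ^ (m - k) = B * B ^ (m - k - 1)" using km by (simp add: power_Suc[symmetric] Suc_diff_Suc)
    ultimately have "(?y + f m * B ^ m) div B ^ k mod B = (?y div B ^ k + B * (f m * B ^ (m - k - 1))) mod B"
      by (simp add: mult.left_commute)
    also have "\<dots> = ?y div B ^ k mod B" by (rule mod_mult_self2)
    finally have "(?y + f m * B ^ m) div B ^ k mod B = ?y div B ^ k mod B" .
    then show ?thesis using ih(2) km by simp
  qed
  show ?case using lt dig s by simp
qed

lemma dmod: "c < (m::nat) \<Longrightarrow> (i * m + c) div m = i \<and> (i * m + c) mod m = c"
proof -
  assume a: "c < m"
  then have "(c + i * m) div m = c div m + i" "(c + i * m) mod m = c mod m"
    by (simp_all add: div_mult_self2)
  then show ?thesis using a by (simp add: add.commute)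
qed

definition valY :: "nat \<Rightarrow> nat \<Rightarrow> nat \<Rightarrow> nat \<Rightarrow> nat \<Rightarrow> nat" where
  "valY B d y t j = y div B ^ (t * d + j) mod B"

definition labZ :: "nat \<Rightarrow> nat \<Rightarrow> nat \<Rightarrow> nat \<Rightarrow> bool" where
  "labZ x z i c \<longleftrightarrow> z div 2 ^ (i * Suc x + c) mod 2 = 1"

definition rk :: "nat \<Rightarrow> (nat \<Rightarrow> nat \<Rightarrow> 'v::linorder) \<Rightarrow> nat \<Rightarrow> nat \<Rightarrow> nat" where
  "rk T v t j = card {t'. t' < T \<and> v t' j < v t j}"

lemma rk_mono:
  assumes "t < T" "t' < T"
  shows "v t j \<le> v t' j \<longleftrightarrow> rk T v t j \<le> rk T v t' j"
proof
  assume "v t j \<le> v t' j"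
  then have "{t''. t'' < T \<and> v t'' j < v t j} \<subseteq> {t''. t'' < T \<and> v t'' j < v t' j}" by auto
  then show "rk T v t j \<le> rk T v t' j" unfolding rk_def by (intro card_mono) auto
next
  assume a: "rk T v t j \<le> rk T v t' j"
  show "v t j \<le> v t' j"
  proof (rule ccontr)
    assume "\<not> v t j \<le> v t' j"
    then have lt: "v t' j < v t j" by simp
    then have "{t''. t'' < T \<and> v t'' j < v t' j} \<subset> {t''. t'' < T \<and> v t'' j < v t j}"
      using assms by auto
    then have "rk T v t' j < rk T v t j" unfolding rk_def by (intro psubset_card_mono) auto
    with a show False by simp
  qed
qed

lemma rk_less: "t < T \<Longrightarrow> rk T v t j < T"
proof -
  assume t: "t < T"
  have "{t'. t' < T \<and> v t' j < v t j} \<subseteq> {..<T} - {t}" by auto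
  then have "rk T v t j \<le> card ({..<T} - {t})" unfolding rk_def by (intro card_mono) auto
  also have "\<dots> = T - 1" using t by simp
  finally show ?thesis using t by simp
qed

lemma coded:
  fixes v :: "nat \<Rightarrow> nat \<Rightarrow> 'v::linorder"
  assumes s: "STRC x N d v l"
  shows "\<exists>y<(2 * len x N) ^ (2 * len x N * d). \<exists>z<2 ^ (len x N * Suc x).
           ISO x N d v l (valY (2 * len x N) d y) (labZ x z) \<and> STRC x N d (valY (2 * len x N) d y) (labZ x z)"
proof -
  let ?T = "2 * len x N"
  let ?r = "rk ?T v"
  define f where "f k = ?r (k div d) (k mod d)" for k
  define y where "y = (\<Sum>k<?T * d. f k * ?T ^ k)"
  have fb: "\<forall>k<?T * d. f k < ?T"
  proof (intro allI impI)
    fix k assume "k < ?T * d"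
    then have "k div d < ?T" by (simp add: less_mult_imp_div_less)
    then show "f k < ?T" unfolding f_def by (rule rk_less)
  qed
  note dg = digits[OF fb, folded y_def]
  have yv: "valY ?T d y t j = ?r t j" if "t < ?T" "j < d" for t j
  proof -
    have k: "t * d + j < ?T * d"
    proof -
      have "t * d + j < Suc t * d" using that by simp
      also have "\<dots> \<le> ?T * d" using that by (intro mult_le_mono1) simp
      finally show ?thesis .
    qed
    have "valY ?T d y t j = f (t * d + j)" unfolding valY_def using dg k by blast
    also have "\<dots> = ?r t j" unfolding f_def using that by simp
    finally show ?thesis .
  qed
  define g where "g k = (if l (k div Suc x) (k mod Suc x) then 1 else 0 :: nat)" for k
  define z where "z = (\<Sum>k<len x N * Suc x. g k * 2 ^ k)"
  have gb: "\<forall>k<len x N * Suc x. g k < 2" unfolding g_def by simp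
  note dz = digits[OF gb, folded z_def]
  have zl: "labZ x z i c = l i c" if "i < len x N" "c \<le> x" for i c
  proof -
    have k: "i * Suc x + c < len x N * Suc x"
    proof -
      have "i * Suc x + c < Suc i * Suc x" using that by simp
      also have "\<dots> \<le> len x N * Suc x" using that by (intro mult_le_mono1) simp
      finally show ?thesis .
    qed
    have "z div 2 ^ (i * Suc x + c) mod 2 = g (i * Suc x + c)" using dz k by blast
    moreover have "(i * Suc x + c) div Suc x = i" "(i * Suc x + c) mod Suc x = c"
      using dmod[of c "Suc x" i] that by auto
    ultimately show ?thesis unfolding labZ_def g_def by simp
  qed
  have iso: "ISO x N d v l (valY ?T d y) (labZ x z)"
    unfolding ISO_def
  proof (intro conjI allI impI)
    fix t t' j assume "t < ?T" "t' < ?T" "j < d"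
    then show "(v t j \<le> v t' j) = (valY ?T d y t j \<le> valY ?T d y t' j)"
      using yv rk_mono by simp
  next
    fix i c assume "i < len x N" "c \<le> x"
    then show "l i c = labZ x z i c" using zl by simp
  qed
  show ?thesis using iso STRC_iso[OF iso s] dg dz by blast
qed


definition rel_of :: "nat \<Rightarrow> rcc8" where
  "rel_of r = [DC, EC, PO, EQ, TPP, NTPP, TPPI, NTPPI] ! r"

lemma rel_of_code: "rel_of (code_rel r) = r"
  by (cases r) (simp_all add: rel_of_def)

lemma code_rel_less: "code_rel r < 8"
  by (cases r) simp_all

lemma G1:
  fixes a b c e :: "real ^ 'n"
  assumes "\<forall>i. a $ i \<le> b $ i" "\<forall>i. c $ i \<le> e $ i"
  shows "cbox a b \<inter> cbox c e = {} \<longleftrightarrow> (\<exists>i. b $ i < c $ i \<or> e $ i < a $ i)"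
proof
  assume h: "cbox a b \<inter> cbox c e = {}"
  show "\<exists>i. b $ i < c $ i \<or> e $ i < a $ i"
  proof (rule ccontr)
    assume "\<not> (\<exists>i. b $ i < c $ i \<or> e $ i < a $ i)"
    then have "\<forall>i. c $ i \<le> b $ i \<and> a $ i \<le> e $ i" by (simp add: not_less)
    then have "(\<chi> i. max (a $ i) (c $ i)) \<in> cbox a b \<inter> cbox c e"
      using assms by (auto simp: mem_box_cart)
    with h show False by blast
  qed
next
  assume "\<exists>i. b $ i < c $ i \<or> e $ i < a $ i"
  then obtain i where hi: "b $ i < c $ i \<or> e $ i < a $ i" by blast
  show "cbox a b \<inter> cbox c e = {}"
  proof (rule ccontr)
    assume "cbox a b \<inter> cbox c e \<noteq> {}"
    then obtain y where "y \<in> cbox a b" "y \<in> cbox c e" by blast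
    then have "a $ i \<le> y $ i" "y $ i \<le> b $ i" "c $ i \<le> y $ i" "y $ i \<le> e $ i" by (auto simp: mem_box_cart)
    with hi show False by linarith
  qed
qed

lemma G2:
  fixes a b c e :: "real ^ 'n"
  assumes "\<forall>i. a $ i < b $ i" "\<forall>i. c $ i < e $ i"
  shows "box a b \<inter> box c e = {} \<longleftrightarrow> (\<exists>i. b $ i \<le> c $ i \<or> e $ i \<le> a $ i)"
proof
  assume h: "box a b \<inter> box c e = {}"
  show "\<exists>i. b $ i \<le> c $ i \<or> e $ i \<le> a $ i"
  proof (rule ccontr)
    assume "\<not> (\<exists>i. b $ i \<le> c $ i \<or> e $ i \<le> a $ i)"
    then have hh: "\<forall>i. c $ i < b $ i \<and> a $ i < e $ i" by (simp add: not_le)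
    have m: "max (a $ i) (c $ i) < min (b $ i) (e $ i)" for i using hh assms by auto
    have "a $ i < (max (a $ i) (c $ i) + min (b $ i) (e $ i)) / 2 \<and> (max (a $ i) (c $ i) + min (b $ i) (e $ i)) / 2 < b $ i
      \<and> c $ i < (max (a $ i) (c $ i) + min (b $ i) (e $ i)) / 2 \<and> (max (a $ i) (c $ i) + min (b $ i) (e $ i)) / 2 < e $ i" for i
      using m[of i] by (simp add: max_def min_def split: if_splits) linarith?
    then have "(\<chi> i. (max (a $ i) (c $ i) + min (b $ i) (e $ i)) / 2) \<in> box a b \<inter> box c e"
      unfolding mem_box_cart Int_iff vec_lambda_beta by blast
    with h show False by blast
  qed
next
  assume "\<exists>i. b $ i \<le> c $ i \<or> e $ i \<le> a $ i"
  then obtain i where hi: "b $ i \<le> c $ i \<or> e $ i \<le> a $ i" by blast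
  show "box a b \<inter> box c e = {}"
  proof (rule ccontr)
    assume "box a b \<inter> box c e \<noteq> {}"
    then obtain y where "y \<in> box a b" "y \<in> box c e" by blast
    then have "a $ i < y $ i" "y $ i < b $ i" "c $ i < y $ i" "y $ i < e $ i" by (auto simp: mem_box_cart)
    with hi show False by linarith
  qed
qed

lemma G5:
  fixes a b c e :: "real ^ 'n"
  assumes "\<forall>i. a $ i \<le> b $ i" "\<forall>i. c $ i \<le> e $ i"
  shows "cbox a b = cbox c e \<longleftrightarrow> (\<forall>i. a $ i = c $ i \<and> b $ i = e $ i)"
proof
  assume "cbox a b = cbox c e"
  then have "cbox a b \<subseteq> cbox c e" "cbox c e \<subseteq> cbox a b" by auto
  then show "\<forall>i. a $ i = c $ i \<and> b $ i = e $ i" using assms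
    unfolding subset_interval_cart by (meson order.antisym)
next
  assume "\<forall>i. a $ i = c $ i \<and> b $ i = e $ i"
  then have "a = c" "b = e" by (auto simp: vec_eq_iff)
  then show "cbox a b = cbox c e" by simp
qed

lemma bij_ex: "bij_betw h {..<d} (UNIV :: 'n set) \<Longrightarrow> (\<exists>j<d. P (h j)) \<longleftrightarrow> (\<exists>i. P i)"
  by (metis bij_betw_iff_bijections lessThan_iff UNIV_I)

lemma bij_all: "bij_betw h {..<d} (UNIV :: 'n set) \<Longrightarrow> (\<forall>j<d. P (h j)) \<longleftrightarrow> (\<forall>i. P i)"
  by (metis bij_betw_iff_bijections lessThan_iff UNIV_I)

lemma rcc8_relc:
  fixes a b c e :: "real ^ 'n"
  assumes ab: "\<forall>i. a $ i < b $ i" and ce: "\<forall>i. c $ i < e $ i"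
    and h: "bij_betw h {..<d} (UNIV :: 'n set)" and r: "r < 8"
  shows "rcc8_rel (rel_of r) (cbox a b) (cbox c e) \<longleftrightarrow>
     relc d r (\<lambda>j. a $ h j) (\<lambda>j. b $ h j) (\<lambda>j. c $ h j) (\<lambda>j. e $ h j)"
proof -
  have ab': "\<forall>i. a $ i \<le> b $ i" and ce': "\<forall>i. c $ i \<le> e $ i" using ab ce by (auto intro: less_imp_le)
  note g = G1[OF ab' ce'] G2[OF ab ce] G5[OF ab' ce']
    subset_interval_cart(1)[of a b c e] subset_interval_cart(1)[of c e a b]
    subset_interval_cart(2)[of a b c e] subset_interval_cart(2)[of c e a b]
  have g5': "cbox c e = cbox a b \<longleftrightarrow> (\<forall>i. a $ i = c $ i \<and> b $ i = e $ i)"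
    using G5[OF ab' ce'] by auto
  note q = bij_ex[OF h, where P="\<lambda>i. b $ i < c $ i \<or> e $ i < a $ i"]
    bij_ex[OF h, where P="\<lambda>i. b $ i \<le> c $ i \<or> e $ i \<le> a $ i"]
    bij_all[OF h, where P="\<lambda>i. c $ i \<le> a $ i \<and> b $ i \<le> e $ i"]
    bij_all[OF h, where P="\<lambda>i. a $ i \<le> c $ i \<and> e $ i \<le> b $ i"]
    bij_all[OF h, where P="\<lambda>i. c $ i < a $ i \<and> b $ i < e $ i"]
    bij_all[OF h, where P="\<lambda>i. a $ i < c $ i \<and> e $ i < b $ i"]
    bij_all[OF h, where P="\<lambda>i. a $ i = c $ i \<and> b $ i = e $ i"]
  have "r = 0 \<or> r = 1 \<or> r = 2 \<or> r = 3 \<or> r = 4 \<or> r = 5 \<or> r = 6 \<or> r = 7" using r by auto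
  then show ?thesis
    unfolding relc_def q using ab' ce'
    by (elim disjE) (simp_all add: rel_of_def g g5' interior_cbox)
qed


lemma embed:
  fixes R :: "nat \<Rightarrow> nat \<Rightarrow> bool"
  assumes tot: "\<And>a b. R a b \<or> R b a" and tr: "\<And>a b c. R a b \<Longrightarrow> R b c \<Longrightarrow> R a c"
  defines "g \<equiv> \<lambda>t. suminf (\<lambda>u. if R u t \<and> \<not> R t u then (1/2::real) ^ u else 0)"
  shows "R t t' \<longleftrightarrow> g t \<le> g t'"
proof -
  let ?f = "\<lambda>t u. if R u t \<and> \<not> R t u then (1/2::real) ^ u else 0"
  have sm: "summable (?f t)" for t
    by (rule summable_comparison_test[OF _ summable_geometric[of "1/2::real"]]) auto
  show ?thesis
  proof
    assume a: "R t t'"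
    have "?f t u \<le> ?f t' u" for u
    proof -
      have "R u t \<and> \<not> R t u \<Longrightarrow> R u t' \<and> \<not> R t' u" using a tr by blast
      then show ?thesis by auto
    qed
    then show "g t \<le> g t'" unfolding g_def by (intro suminf_le sm) auto
  next
    assume a: "g t \<le> g t'"
    show "R t t'"
    proof (rule ccontr)
      assume n: "\<not> R t t'"
      then have r: "R t' t" using tot by blast
      let ?df = "\<lambda>u. ?f t u - ?f t' u"
      have ge: "?f t' u \<le> ?f t u" for u
      proof -
        have "R u t' \<and> \<not> R t' u \<Longrightarrow> R u t \<and> \<not> R t u" using r tr by blast
        then show ?thesis by auto
      qed
      have sd: "summable ?df" using sm by (intro summable_diff)
      have "sum ?df {t'} \<le> suminf ?df"
        by (rule sum_le_suminf[OF sd]) (use ge in auto)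
      moreover have "?df t' = (1/2) ^ t'" using n r by auto
      moreover have "suminf ?df = g t - g t'" unfolding g_def using suminf_diff[OF sm[of t] sm[of t']] by simp
      ultimately have "(1/2::real) ^ t' \<le> g t - g t'" by simp
      moreover have "(0::real) < (1/2) ^ t'" by simp
      ultimately show False using a by linarith
    qed
  qed
qed

lemma ISO_refl: "ISO x N d v l v l"
  unfolding ISO_def by blast

lemma tok_len: "t < 2 * len x t"
  unfolding len_def by simp

lemma tok_len2: "t \<le> M \<Longrightarrow> t < 2 * len x M"
  using tok_len[of M x] by linarith

lemma limit_seq:
  fixes V :: "nat \<Rightarrow> nat \<Rightarrow> nat \<Rightarrow> nat" and L :: "nat \<Rightarrow> nat \<Rightarrow> nat \<Rightarrow> bool"
  assumes iso: "\<And>N. ISO x N d (V N) (L N) (V (Suc N)) (L (Suc N))"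
  shows "\<exists>v :: nat \<Rightarrow> nat \<Rightarrow> real. \<exists>l. \<forall>N. ISO x N d (V N) (L N) v l"
proof -
  have isoM: "ISO x N d (V N) (L N) (V (N + k)) (L (N + k))" for N k
  proof (induction k)
    case 0 then show ?case by (simp add: ISO_refl)
  next
    case (Suc k)
    have "ISO x N d (V (N + k)) (L (N + k)) (V (Suc (N + k))) (L (Suc (N + k)))"
      by (rule ISO_mono[OF iso]) simp
    with Suc show ?case by (auto intro: ISO_trans)
  qed
  define le where "le j t t' \<longleftrightarrow> V (t + t') t j \<le> V (t + t') t' j" for j t t'
  have cmp: "V N t j \<le> V N t' j \<longleftrightarrow> le j t t'"
    if "t < 2 * len x N" "t' < 2 * len x N" "j < d" for N t t' j
  proof -
    have a: "V N t j \<le> V N t' j \<longleftrightarrow> V (N + (t + t')) t j \<le> V (N + (t + t')) t' j"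
      using isoM[of N "t + t'"] that unfolding ISO_def by blast
    have b: "V (t + t') t j \<le> V (t + t') t' j \<longleftrightarrow> V ((t + t') + N) t j \<le> V ((t + t') + N) t' j"
      using isoM[of "t + t'" N] that tok_len2[of t "t + t'" x] tok_len2[of t' "t + t'" x] unfolding ISO_def by simp
    show ?thesis using a b unfolding le_def by (simp add: add.commute)
  qed
  have tot: "le j a b \<or> le j b a" if "j < d" for j a b
  proof -
    have "a < 2 * len x (a + b)" "b < 2 * len x (a + b)" using tok_len2 by simp_all
    then show ?thesis using cmp[OF _ _ that] by (meson nat_le_linear)
  qed
  have tr: "le j a c" if "j < d" "le j a b" "le j b c" for j a b c
  proof -
    have "a < 2 * len x (a + b + c)" "b < 2 * len x (a + b + c)" "c < 2 * len x (a + b + c)"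
      using tok_len2 by simp_all
    then show ?thesis using cmp[OF _ _ that(1)] that(2,3) by (meson le_trans)
  qed
  define g where "g j t = suminf (\<lambda>u. if le j u t \<and> \<not> le j t u then (1/2::real) ^ u else 0)" for j t
  have gle: "le j t t' \<longleftrightarrow> g j t \<le> g j t'" if "j < d" for j t t'
    unfolding g_def by (rule embed) (use tot tr that in blast)+
  define v where "v t j = (if j < d then g j t else 0)" for t j
  define l where "l i c = L i i c" for i c
  have "ISO x N d (V N) (L N) v l" for N
    unfolding ISO_def
  proof (intro conjI allI impI)
    fix t t' j assume h: "t < 2 * len x N" "t' < 2 * len x N" "j < d"
    then show "(V N t j \<le> V N t' j) = (v t j \<le> v t' j)"
      unfolding v_def using cmp gle by simp
  next
    fix i c assume h: "i < len x N" "c \<le> x"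
    have "L N i c = L (N + i) i c" using isoM[of N i] h unfolding ISO_def by blast
    moreover have "L i i c = L (i + N) i c" using isoM[of i N] h unfolding ISO_def len_def by simp
    ultimately show "L N i c = l i c" unfolding l_def by (simp add: add.commute)
  qed
  then show ?thesis by blast
qed


lemma STRC_E:
  assumes "STRC x N d v l"
  shows STRC_E1: "\<And>i j. i < len x N \<Longrightarrow> j < d \<Longrightarrow> v (2*i) j < v (Suc (2*i)) j"
    and STRC_E2: "\<And>i i' c. i < len x N \<Longrightarrow> i' < len x N \<Longrightarrow>
       (\<forall>j<d. v (2*i) j = v (2*i') j \<and> v (Suc (2*i)) j = v (Suc (2*i')) j) \<Longrightarrow> c \<le> x \<Longrightarrow> l i c = l i' c"
    and STRC_E3: "\<And>i c. i < len x N \<Longrightarrow> c \<le> x \<Longrightarrow> fst (prod_decode c) = 1 \<Longrightarrow> l i c = (\<not> l i (snd (prod_decode c)))"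
    and STRC_E3b: "\<And>i c. i < len x N \<Longrightarrow> c \<le> x \<Longrightarrow> fst (prod_decode c) = 2 \<Longrightarrow>
        l i c = (l i (fst (prod_decode (snd (prod_decode c)))) \<and> l i (snd (prod_decode (snd (prod_decode c)))))"
    and STRC_E4: "\<And>i i' c. i < len x N \<Longrightarrow> i' < len x N \<Longrightarrow> c \<le> x \<Longrightarrow> 3 \<le> fst (prod_decode c) \<Longrightarrow> fst (prod_decode c) \<le> 10 \<Longrightarrow> l i c \<Longrightarrow>
       relc d (fst (prod_decode c) - 3) (\<lambda>j. v (2*i) j) (\<lambda>j. v (Suc (2*i)) j) (\<lambda>j. v (2*i') j) (\<lambda>j. v (Suc (2*i')) j)
       \<Longrightarrow> l i' (snd (prod_decode c))"
    and STRC_E5: "\<And>i c. i < N \<Longrightarrow> c \<le> x \<Longrightarrow> 3 \<le> fst (prod_decode c) \<Longrightarrow> fst (prod_decode c) \<le> 10 \<Longrightarrow> \<not> l i c \<Longrightarrow>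
       relc d (fst (prod_decode c) - 3) (\<lambda>j. v (2*i) j) (\<lambda>j. v (Suc (2*i)) j) (\<lambda>j. v (2 * wit x i c) j) (\<lambda>j. v (Suc (2 * wit x i c)) j)
       \<and> \<not> l (wit x i c) (snd (prod_decode c))"
    and STRC_E6: "\<not> l 0 x"
  using assms unfolding STRC_def DEC_iff by blast+


lemma code_lt: "code_fm \<phi> \<le> code_fm (Neg \<phi>)" "code_fm \<phi> \<le> code_fm (Box r \<phi>)"
  "code_fm \<phi> \<le> code_fm (Conj \<phi> \<psi>)" "code_fm \<psi> \<le> code_fm (Conj \<phi> \<psi>)"
  by (simp_all, meson le_prod_encode_2, meson le_prod_encode_2,
      meson le_prod_encode_1 le_prod_encode_2 order_trans, meson le_prod_encode_1 le_prod_encode_2 order_trans)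

lemma model:
  fixes v :: "nat \<Rightarrow> nat \<Rightarrow> real" and \<phi> :: fm
  assumes str: "\<And>N. STRC x N CARD('n::finite) v l" and x: "x = code_fm \<phi>"
  shows "\<phi> \<notin> logic_S_rect TYPE('n)"
proof -
  define d where "d = CARD('n)"
  have str': "\<And>N. STRC x N d v l" using str d_def by simp
  obtain h where hb0: "bij_betw h {0..<card (UNIV :: 'n set)} (UNIV :: 'n set)"
    using ex_bij_betw_nat_finite[of "UNIV :: 'n set"] finite_class.finite_UNIV by blast
  have hb: "bij_betw h {..<d} (UNIV :: 'n set)" using hb0 unfolding d_def by (simp add: atLeast0LessThan)
  define hi where "hi = inv_into {..<d} h"
  have hi1: "hi k < d" for k
    unfolding hi_def using hb by (metis UNIV_I bij_betw_def inv_into_into lessThan_iff)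
  have hi2: "h (hi k) = k" for k
    unfolding hi_def using hb by (meson UNIV_I bij_betw_inv_into_right)
  have hi3: "j < d \<Longrightarrow> hi (h j) = j" for j
    unfolding hi_def using hb by (meson bij_betw_inv_into_left lessThan_iff)
  define lo where "lo i = (\<chi> k. v (2*i) (hi k))" for i
  define up where "up i = (\<chi> k. v (Suc (2*i)) (hi k))" for i
  define R where "R i = cbox (lo i) (up i)" for i
  have ilen: "i < len x i" for i unfolding len_def by simp
  have lu: "\<forall>k. lo i $ k < up i $ k" for i
    unfolding lo_def up_def using STRC_E1[OF str'[of i] ilen hi1] by simp
  have loh: "lo i $ h j = v (2*i) j" "up i $ h j = v (Suc (2*i)) j" if "j < d" for i j
    unfolding lo_def up_def using hi3[OF that] by simp_all
  have rel: "rcc8_rel (rel_of r) (R i) (R i') \<longleftrightarrow>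
      relc d r (\<lambda>j. v (2*i) j) (\<lambda>j. v (Suc (2*i)) j) (\<lambda>j. v (2*i') j) (\<lambda>j. v (Suc (2*i')) j)"
    if "r < 8" for r i i'
  proof -
    have "rcc8_rel (rel_of r) (R i) (R i') \<longleftrightarrow>
      relc d r (\<lambda>j. lo i $ h j) (\<lambda>j. up i $ h j) (\<lambda>j. lo i' $ h j) (\<lambda>j. up i' $ h j)"
      unfolding R_def by (rule rcc8_relc[OF lu lu hb that])
    also have "\<dots> \<longleftrightarrow> relc d r (\<lambda>j. v (2*i) j) (\<lambda>j. v (Suc (2*i)) j) (\<lambda>j. v (2*i') j) (\<lambda>j. v (Suc (2*i')) j)"
      by (rule relc_cong) (simp add: loh)
    finally show ?thesis .
  qed
  have eqR: "R i = R i' \<longleftrightarrow> (\<forall>j<d. v (2*i) j = v (2*i') j \<and> v (Suc (2*i)) j = v (Suc (2*i')) j)" for i i'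
  proof -
    have "R i = R i' \<longleftrightarrow> (\<forall>k. lo i $ k = lo i' $ k \<and> up i $ k = up i' $ k)"
      unfolding R_def by (rule G5) (use lu less_imp_le in blast)+
    also have "\<dots> \<longleftrightarrow> (\<forall>j<d. lo i $ h j = lo i' $ h j \<and> up i $ h j = up i' $ h j)"
      using bij_all[OF hb, where P="\<lambda>k. lo i $ k = lo i' $ k \<and> up i $ k = up i' $ k"] by simp
    also have "\<dots> \<longleftrightarrow> (\<forall>j<d. v (2*i) j = v (2*i') j \<and> v (Suc (2*i)) j = v (Suc (2*i')) j)"
      using loh by auto
    finally show ?thesis .
  qed
  define W where "W = range R"
  define Vl where "Vl k = {R i | i. l i (code_fm (PVar k))}" for k
  have ilen2: "i < len x (i + i')" "i' < len x (i + i')" for i i'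
    unfolding len_def by (simp_all add: trans_less_add1 less_Suc_eq_le)
  have truth: "code_fm \<psi> \<le> x \<Longrightarrow> sat W Vl (R i) \<psi> \<longleftrightarrow> l i (code_fm \<psi>)" for \<psi> i
  proof (induction \<psi> arbitrary: i)
    case (PVar k)
    show ?case
    proof
      assume "sat W Vl (R i) (PVar k)"
      then obtain i' where e: "R i = R i'" "l i' (code_fm (PVar k))" by (auto simp: Vl_def)
      have "l i (code_fm (PVar k)) = l i' (code_fm (PVar k))"
        by (rule STRC_E2[OF str'[of "i + i'"] ilen2]) (use e eqR PVar in auto)
      with e show "l i (code_fm (PVar k))" by simp
    next
      assume "l i (code_fm (PVar k))" then show "sat W Vl (R i) (PVar k)" by (auto simp: Vl_def)
    qed
  next
    case (Neg \<psi>)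
    have c: "code_fm \<psi> \<le> x" using Neg code_lt by (meson order_trans)
    have "l i (code_fm (Neg \<psi>)) = (\<not> l i (code_fm \<psi>))"
      using STRC_E3[OF str'[of i] ilen Neg.prems] by simp
    then show ?case using Neg.IH[OF c] by simp
  next
    case (Conj \<psi>1 \<psi>2)
    have c: "code_fm \<psi>1 \<le> x" "code_fm \<psi>2 \<le> x" using Conj code_lt by (meson order_trans)+
    have "l i (code_fm (Conj \<psi>1 \<psi>2)) = (l i (code_fm \<psi>1) \<and> l i (code_fm \<psi>2))"
      using STRC_E3b[OF str'[of i] ilen Conj.prems] by simp
    then show ?case using Conj.IH(1)[OF c(1)] Conj.IH(2)[OF c(2)] by simp
  next
    case (Box r \<psi>)
    have c: "code_fm \<psi> \<le> x" using Box code_lt by (meson order_trans)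
    let ?c = "code_fm (Box r \<psi>)"
    have f: "fst (prod_decode ?c) = 3 + code_rel r" "snd (prod_decode ?c) = code_fm \<psi>" by simp_all
    have t: "3 \<le> fst (prod_decode ?c)" "fst (prod_decode ?c) \<le> 10" "fst (prod_decode ?c) - 3 = code_rel r"
      using f code_rel_less[of r] by simp_all
    have rr: "rcc8_rel r (R i) (R i') \<longleftrightarrow>
      relc d (code_rel r) (\<lambda>j. v (2*i) j) (\<lambda>j. v (Suc (2*i)) j) (\<lambda>j. v (2*i') j) (\<lambda>j. v (Suc (2*i')) j)" for i i'
      using rel[OF code_rel_less[of r], of i i'] by (simp add: rel_of_code)
    show ?case
    proof
      assume s: "sat W Vl (R i) (Box r \<psi>)"
      show "l i ?c"
      proof (rule ccontr)
        assume n: "\<not> l i ?c"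
        have "relc d (code_rel r) (\<lambda>j. v (2*i) j) (\<lambda>j. v (Suc (2*i)) j) (\<lambda>j. v (2 * wit x i ?c) j) (\<lambda>j. v (Suc (2 * wit x i ?c)) j)
          \<and> \<not> l (wit x i ?c) (code_fm \<psi>)"
          using STRC_E5[OF str'[of "Suc i"] _ Box.prems t(1,2) n] t(3) f(2) by simp
        then have "rcc8_rel r (R i) (R (wit x i ?c))" "\<not> sat W Vl (R (wit x i ?c)) \<psi>"
          using rr Box.IH[OF c] by auto
        moreover have "R (wit x i ?c) \<in> W" unfolding W_def by simp
        ultimately show False using s by auto
      qed
    next
      assume l: "l i ?c"
      show "sat W Vl (R i) (Box r \<psi>)"
      proof (simp, intro ballI impI)
        fix u assume u: "u \<in> W" "rcc8_rel r (R i) u"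
        then obtain i' where i': "u = R i'" unfolding W_def by blast
        have "l i' (code_fm \<psi>)"
          using STRC_E4[OF str'[of "i + i'"] ilen2 Box.prems t(1,2) l] u(2) i' rr t(3) f(2) by simp
        then show "sat W Vl u \<psi>" using Box.IH[OF c] i' by simp
      qed
    qed
  qed
  have n0: "\<not> sat W Vl (R 0) \<phi>" using truth[of \<phi> 0] STRC_E6[OF str'[of 0]] x by simp
  have "W \<subseteq> rects" unfolding W_def R_def rects_def using lu by blast
  moreover have "W \<noteq> {}" unfolding W_def by simp
  moreover have "R 0 \<in> W" unfolding W_def by simp
  ultimately show ?thesis using n0 unfolding logic_S_rect_def by blast
qed


locale kt =
  fixes C :: "nat \<Rightarrow> 'a set" and p :: "nat \<Rightarrow> 'a \<Rightarrow> 'a"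
  assumes fin: "\<And>N. finite (C N)" and ne: "\<And>N. C N \<noteq> {}"
    and pc: "\<And>N c. c \<in> C (Suc N) \<Longrightarrow> p N c \<in> C N"
begin

fun proj :: "nat \<Rightarrow> nat \<Rightarrow> 'a \<Rightarrow> 'a" where
  "proj 0 N c = c"
| "proj (Suc k) N c = proj k N (p (N + k) c)"

lemma proj_in: "c \<in> C (N + k) \<Longrightarrow> proj k N c \<in> C N"
proof (induction k arbitrary: c)
  case 0 then show ?case by simp
next
  case (Suc k)
  then have "p (N + k) c \<in> C (N + k)" using pc by simp
  then show ?case using Suc by simp
qed

lemma proj_comp: "proj a N (proj b (N + a) c) = proj (a + b) N c"
  by (induction b arbitrary: c) (auto simp: add.assoc)

lemma proj_Suc: "p N (proj k (Suc N) c) = proj (Suc k) N c"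
proof -
  have "proj 1 N (proj k (N + 1) c) = proj (1 + k) N c" by (rule proj_comp)
  then show ?thesis by simp
qed

definition good :: "nat \<Rightarrow> 'a \<Rightarrow> bool" where
  "good N c \<longleftrightarrow> c \<in> C N \<and> (\<forall>k. \<exists>e\<in>C (N + k). proj k N e = c)"

lemma good0: "\<exists>c. good 0 c"
proof (rule ccontr)
  assume a: "\<nexists>c. good 0 c"
  have "\<forall>c\<in>C 0. \<exists>k. \<not> (\<exists>e\<in>C k. proj k 0 e = c)"
  proof
    fix c assume "c \<in> C 0"
    with a have "\<not> (\<forall>k. \<exists>e\<in>C (0 + k). proj k 0 e = c)" unfolding good_def by blast
    then show "\<exists>k. \<not> (\<exists>e\<in>C k. proj k 0 e = c)" by simp
  qed
  from bchoice[OF this] obtain kf where kf0: "\<forall>c\<in>C 0. \<not> (\<exists>e\<in>C (kf c). proj (kf c) 0 e = c)"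
    by blast
  then have kf: "\<And>c. c \<in> C 0 \<Longrightarrow> \<not> (\<exists>e\<in>C (kf c). proj (kf c) 0 e = c)" by blast
  define K where "K = Max (kf ` C 0)"
  obtain e where e: "e \<in> C K" using ne by blast
  define c where "c = proj K 0 e"
  have c: "c \<in> C 0" unfolding c_def using proj_in[of e 0 K] e by simp
  have kK: "kf c \<le> K" unfolding K_def using fin c by auto
  define e' where "e' = proj (K - kf c) (kf c) e"
  have "e' \<in> C (kf c)" unfolding e'_def using proj_in[of e "kf c" "K - kf c"] e kK by simp
  moreover have "proj (kf c) 0 e' = proj K 0 e"
    unfolding e'_def using proj_comp[of "kf c" 0 "K - kf c" e] kK by simp
  then have "proj (kf c) 0 e' = c" unfolding c_def .
  ultimately show False using kf[OF c] by blast
qed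

lemma good_step: "good N c \<Longrightarrow> \<exists>c'. good (Suc N) c' \<and> p N c' = c"
proof (rule ccontr)
  assume g: "good N c" and a: "\<nexists>c'. good (Suc N) c' \<and> p N c' = c"
  have "\<forall>c'\<in>{c'\<in>C (Suc N). p N c' = c}. \<exists>k. \<not> (\<exists>e\<in>C (Suc N + k). proj k (Suc N) e = c')"
  proof
    fix c' assume "c' \<in> {c'\<in>C (Suc N). p N c' = c}"
    with a show "\<exists>k. \<not> (\<exists>e\<in>C (Suc N + k). proj k (Suc N) e = c')" unfolding good_def by blast
  qed
  from bchoice[OF this] obtain kf where kf0: "\<forall>c'\<in>{c'\<in>C (Suc N). p N c' = c}. \<not> (\<exists>e\<in>C (Suc N + kf c'). proj (kf c') (Suc N) e = c')"
    by blast
  then have kf: "\<And>c'. c' \<in> C (Suc N) \<Longrightarrow> p N c' = c \<Longrightarrow> \<not> (\<exists>e\<in>C (Suc N + kf c'). proj (kf c') (Suc N) e = c')"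
    by blast
  define K where "K = Max (kf ` {c'\<in>C (Suc N). p N c' = c})"
  obtain e where e: "e \<in> C (N + Suc K)" "proj (Suc K) N e = c" using g unfolding good_def by blast
  define c' where "c' = proj K (Suc N) e"
  have c': "c' \<in> C (Suc N)" unfolding c'_def using proj_in[of e "Suc N" K] e by simp
  have pc': "p N c' = c" unfolding c'_def using proj_Suc e by simp
  have kK: "kf c' \<le> K" unfolding K_def using fin c' pc' by (intro Max_ge) auto
  define e' where "e' = proj (K - kf c') (Suc N + kf c') e"
  have "e' \<in> C (Suc N + kf c')" unfolding e'_def using proj_in[of e "Suc N + kf c'" "K - kf c'"] e kK by simp
  moreover have "proj (kf c') (Suc N) e' = proj K (Suc N) e"
    unfolding e'_def using proj_comp[of "kf c'" "Suc N" "K - kf c'" e] kK by simp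
  then have "proj (kf c') (Suc N) e' = c'" unfolding c'_def .
  ultimately show False using kf[OF c' pc'] by blast
qed

lemma koenig: "\<exists>f. \<forall>N. f N \<in> C N \<and> p N (f (Suc N)) = f N"
proof -
  define f where "f = rec_nat (SOME c. good 0 c) (\<lambda>N c. SOME c'. good (Suc N) c' \<and> p N c' = c)"
  have f0: "f 0 = (SOME c. good 0 c)" and fS: "f (Suc N) = (SOME c'. good (Suc N) c' \<and> p N c' = f N)" for N
    unfolding f_def by simp_all
  have gd: "good N (f N) \<and> (\<forall>M. N = Suc M \<longrightarrow> p M (f N) = f M)" for N
  proof (induction N)
    case 0 then show ?case using good0 f0 by (metis someI_ex nat.distinct(1))
  next
    case (Suc N)
    then have "\<exists>c'. good (Suc N) c' \<and> p N c' = f N" using good_step by blast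
    then show ?case using fS[of N] by (metis (mono_tags, lifting) someI_ex nat.inject)
  qed
  show ?thesis using gd unfolding good_def by blast
qed

end


abbreviation BB :: "nat \<Rightarrow> nat \<Rightarrow> nat" where "BB x N \<equiv> 2 * len x N"

lemma chain:
  assumes ex: "\<And>N. \<exists>y<BB x N ^ (BB x N * d). \<exists>z<2 ^ (len x N * Suc x). STRC x N d (valY (BB x N) d y) (labZ x z)"
  shows "\<exists>V :: nat \<Rightarrow> nat \<Rightarrow> nat \<Rightarrow> nat. \<exists>L. \<forall>N. STRC x N d (V N) (L N) \<and> ISO x N d (V N) (L N) (V (Suc N)) (L (Suc N))"
proof -
  define C where "C N = {(y, z). y < BB x N ^ (BB x N * d) \<and> z < 2 ^ (len x N * Suc x) \<and>
     STRC x N d (valY (BB x N) d y) (labZ x z)}" for N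
  define P where "P N c c' \<longleftrightarrow> c \<in> C N \<and> ISO x N d (valY (BB x N) d (fst c)) (labZ x (snd c))
      (valY (BB x (Suc N)) d (fst c')) (labZ x (snd c'))" for N c c'
  define p where "p N c' = (SOME c. P N c c')" for N c'
  have fin: "finite (C N)" for N
    by (rule finite_subset[of _ "{..<BB x N ^ (BB x N * d)} \<times> {..<2 ^ (len x N * Suc x)}"]) (auto simp: C_def)
  have ne: "C N \<noteq> {}" for N using ex[of N] unfolding C_def by blast
  have exP: "\<exists>c. P N c c'" if "c' \<in> C (Suc N)" for N c'
  proof -
    have s: "STRC x (Suc N) d (valY (BB x (Suc N)) d (fst c')) (labZ x (snd c'))"
      using that unfolding C_def by auto
    have "STRC x N d (valY (BB x (Suc N)) d (fst c')) (labZ x (snd c'))"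
      by (rule STRC_mono[OF s]) simp
    from coded[OF this] obtain y z where yz: "y < BB x N ^ (BB x N * d)" "z < 2 ^ (len x N * Suc x)"
      "ISO x N d (valY (BB x (Suc N)) d (fst c')) (labZ x (snd c')) (valY (BB x N) d y) (labZ x z)"
      "STRC x N d (valY (BB x N) d y) (labZ x z)" by blast
    then have "P N (y, z) c'" unfolding P_def C_def by (auto intro: ISO_sym)
    then show ?thesis by blast
  qed
  have pP: "P N (p N c') c'" if "c' \<in> C (Suc N)" for N c'
    unfolding p_def using exP[OF that] by (rule someI_ex)
  interpret kt C p
  proof
    show "\<And>N. finite (C N)" by (rule fin)
    show "\<And>N. C N \<noteq> {}" by (rule ne)
    show "\<And>N c. c \<in> C (Suc N) \<Longrightarrow> p N c \<in> C N" using pP unfolding P_def by blast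
  qed
  obtain f where f: "\<And>N. f N \<in> C N" "\<And>N. p N (f (Suc N)) = f N" using koenig by blast
  define V where "V N = valY (BB x N) d (fst (f N))" for N
  define L where "L N = labZ x (snd (f N))" for N
  have "STRC x N d (V N) (L N) \<and> ISO x N d (V N) (L N) (V (Suc N)) (L (Suc N))" for N
  proof
    show "STRC x N d (V N) (L N)" using f(1)[of N] unfolding C_def V_def L_def by auto
    show "ISO x N d (V N) (L N) (V (Suc N)) (L (Suc N))"
      using pP[OF f(1)[of "Suc N"]] f(2)[of N] unfolding P_def V_def L_def by simp
  qed
  then show ?thesis by (intro exI[of _ V] exI[of _ L]) blast
qed

lemma validA:
  assumes "\<phi> \<in> logic_S_rect TYPE('n::finite)" "x = code_fm \<phi>"
  shows "\<exists>N. \<not> (\<exists>y<BB x N ^ (BB x N * CARD('n)). \<exists>z<2 ^ (len x N * Suc x).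
            STRC x N CARD('n) (valY (BB x N) CARD('n) y) (labZ x z))"
proof (rule ccontr)
  assume "\<not> ?thesis"
  then have ex: "\<And>N. \<exists>y<BB x N ^ (BB x N * CARD('n)). \<exists>z<2 ^ (len x N * Suc x).
            STRC x N CARD('n) (valY (BB x N) CARD('n) y) (labZ x z)" by blast
  obtain V :: "nat \<Rightarrow> nat \<Rightarrow> nat \<Rightarrow> nat" and L where VL: "\<And>N. STRC x N CARD('n) (V N) (L N)" "\<And>N. ISO x N CARD('n) (V N) (L N) (V (Suc N)) (L (Suc N))"
    using chain[OF ex] by blast
  obtain v :: "nat \<Rightarrow> nat \<Rightarrow> real" and l where vl: "\<And>N. ISO x N CARD('n) (V N) (L N) v l"
    using limit_seq[OF VL(2)] by blast
  have "\<And>N. STRC x N CARD('n) v l" using STRC_iso[OF vl VL(1)] .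
  from model[OF this assms(2)] assms(1) show False by blast
qed


lemma triangle_ge: "n \<le> triangle n"
  by (induction n) (auto simp: triangle_Suc)

lemma pd_snd_less: "fst (prod_decode c) \<noteq> 0 \<Longrightarrow> snd (prod_decode c) < c"
proof -
  assume a: "fst (prod_decode c) \<noteq> 0"
  obtain t b where e: "prod_decode c = (t, b)" by fastforce
  then have c: "c = prod_encode (t, b)" by (metis prod_decode_inverse)
  have "t + b \<le> triangle (t + b)" by (rule triangle_ge)
  then show ?thesis using a e c by (simp add: prod_encode_def)
qed

lemma pd_le_self: "fst (prod_decode c) \<le> c" "snd (prod_decode c) \<le> c"
  using pd_le1 pd_le2 by auto

function dec :: "nat \<Rightarrow> fm" where
  "dec c = (if fst (prod_decode c) = 0 then PVar (snd (prod_decode c))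
   else if fst (prod_decode c) = 1 then Neg (dec (snd (prod_decode c)))
   else if fst (prod_decode c) = 2 then Conj (dec (fst (prod_decode (snd (prod_decode c))))) (dec (snd (prod_decode (snd (prod_decode c)))))
   else if fst (prod_decode c) \<le> 10 then Box (rel_of (fst (prod_decode c) - 3)) (dec (snd (prod_decode c)))
   else PVar 0)"
  by auto
termination
proof (relation "Wellfounded.measure id")
  show "wf (Wellfounded.measure id)" by simp
next
  fix c assume "\<not> fst (prod_decode c) = 0" "fst (prod_decode c) = 1"
  then show "(snd (prod_decode c), c) \<in> Wellfounded.measure id" using pd_snd_less by simp
next
  fix c assume "\<not> fst (prod_decode c) = 0" "\<not> fst (prod_decode c) = 1" "fst (prod_decode c) = 2"
  then show "(fst (prod_decode (snd (prod_decode c))), c) \<in> Wellfounded.measure id"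
    using pd_snd_less[of c] pd_le_self(1)[of "snd (prod_decode c)"] by simp
next
  fix c assume "\<not> fst (prod_decode c) = 0" "\<not> fst (prod_decode c) = 1" "fst (prod_decode c) = 2"
  then show "(snd (prod_decode (snd (prod_decode c))), c) \<in> Wellfounded.measure id"
    using pd_snd_less[of c] pd_le_self(2)[of "snd (prod_decode c)"] by simp
next
  fix c assume "\<not> fst (prod_decode c) = 0" "\<not> fst (prod_decode c) = 1" "\<not> fst (prod_decode c) = 2" "fst (prod_decode c) \<le> 10"
  then show "(snd (prod_decode c), c) \<in> Wellfounded.measure id" using pd_snd_less by simp
qed

declare dec.simps[simp del]

lemma dec1: "fst (prod_decode c) = 1 \<Longrightarrow> dec c = Neg (dec (snd (prod_decode c)))"
  by (subst dec.simps) simp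
lemma dec2: "fst (prod_decode c) = 2 \<Longrightarrow> dec c = Conj (dec (fst (prod_decode (snd (prod_decode c))))) (dec (snd (prod_decode (snd (prod_decode c)))))"
  by (subst dec.simps) simp
lemma dec3: "3 \<le> fst (prod_decode c) \<Longrightarrow> fst (prod_decode c) \<le> 10 \<Longrightarrow> dec c = Box (rel_of (fst (prod_decode c) - 3)) (dec (snd (prod_decode c)))"
  by (subst dec.simps) simp

lemma dec_code: "dec (code_fm \<phi>) = \<phi>"
proof (induction \<phi>)
  case (PVar k) then show ?case by (subst dec.simps) simp
next
  case (Neg \<phi>) then show ?case by (simp add: dec1)
next
  case (Conj \<phi>1 \<phi>2) then show ?case by (simp add: dec2)
next
  case (Box r \<phi>)
  have "3 \<le> fst (prod_decode (code_fm (Box r \<phi>)))" "fst (prod_decode (code_fm (Box r \<phi>))) \<le> 10"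
    using code_rel_less[of r] by simp_all
  then show ?case using Box by (simp add: dec3 rel_of_code)
qed

fun bfs :: "'a set set \<Rightarrow> (nat \<Rightarrow> 'a set set) \<Rightarrow> 'a set \<Rightarrow> nat \<Rightarrow> nat \<Rightarrow> ('a::topological_space) set" where
  "bfs W V s x 0 = s"
| "bfs W V s x (Suc m) = (let i = m div Suc x; c = m mod Suc x in
     if 3 \<le> fst (prod_decode c) \<and> fst (prod_decode c) \<le> 10 \<and> \<not> sat W V (bfs W V s x i) (dec c)
     then (SOME t. t \<in> W \<and> rcc8_rel (rel_of (fst (prod_decode c) - 3)) (bfs W V s x i) t \<and> \<not> sat W V t (dec (snd (prod_decode c))))
     else s)"

lemma validB:
  assumes nv: "\<phi> \<notin> logic_S_rect TYPE('n::finite)" and x: "x = code_fm \<phi>"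
  shows "\<exists>y<BB x N ^ (BB x N * CARD('n)). \<exists>z<2 ^ (len x N * Suc x).
            STRC x N CARD('n) (valY (BB x N) CARD('n) y) (labZ x z)"
proof -
  from nv obtain W :: "(real ^ 'n) set set" and V s where W: "W \<subseteq> rects" "s \<in> W" "\<not> sat W V s \<phi>"
    unfolding logic_S_rect_def by blast
  define d where "d = CARD('n)"
  obtain h where hb0: "bij_betw h {0..<card (UNIV :: 'n set)} (UNIV :: 'n set)"
    using ex_bij_betw_nat_finite[of "UNIV :: 'n set"] finite_class.finite_UNIV by blast
  have hb: "bij_betw h {..<d} (UNIV :: 'n set)" using hb0 unfolding d_def by (simp add: atLeast0LessThan)
  define p where "p = bfs W V s x"
  have p0: "p 0 = s" unfolding p_def by simp
  have pS: "p (Suc m) = (if 3 \<le> fst (prod_decode (m mod Suc x)) \<and> fst (prod_decode (m mod Suc x)) \<le> 10 \<and>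
        \<not> sat W V (p (m div Suc x)) (dec (m mod Suc x))
     then (SOME t. t \<in> W \<and> rcc8_rel (rel_of (fst (prod_decode (m mod Suc x)) - 3)) (p (m div Suc x)) t \<and>
        \<not> sat W V t (dec (snd (prod_decode (m mod Suc x)))))
     else s)" for m
    unfolding p_def by (simp add: Let_def)
  have witP: "p (Suc m) \<in> W \<and> rcc8_rel (rel_of (fst (prod_decode (m mod Suc x)) - 3)) (p (m div Suc x)) (p (Suc m)) \<and>
        \<not> sat W V (p (Suc m)) (dec (snd (prod_decode (m mod Suc x))))"
    if c: "3 \<le> fst (prod_decode (m mod Suc x))" "fst (prod_decode (m mod Suc x)) \<le> 10"
      "\<not> sat W V (p (m div Suc x)) (dec (m mod Suc x))" for m
  proof -
    have "\<exists>t. t \<in> W \<and> rcc8_rel (rel_of (fst (prod_decode (m mod Suc x)) - 3)) (p (m div Suc x)) t \<and>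
        \<not> sat W V t (dec (snd (prod_decode (m mod Suc x))))"
      using c(3) unfolding dec3[OF c(1,2)] by auto
    then show ?thesis unfolding pS[of m] using c by (simp only: if_True simp_thms) (rule someI_ex)
  qed
  have pW: "p m \<in> W" for m
  proof (cases m)
    case 0 then show ?thesis using p0 W by simp
  next
    case (Suc m')
    then show ?thesis using witP[of m'] pS[of m'] W(2) by (cases "3 \<le> fst (prod_decode (m' mod Suc x)) \<and> fst (prod_decode (m' mod Suc x)) \<le> 10 \<and>
        \<not> sat W V (p (m' div Suc x)) (dec (m' mod Suc x))") auto
  qed
  define cor where "cor R = (SOME ab. R = cbox (fst ab) (snd ab) \<and> (\<forall>k. fst ab $ k < snd ab $ k))" for R :: "(real ^ 'n) set"
  have corP: "p i = cbox (fst (cor (p i))) (snd (cor (p i))) \<and> (\<forall>k. fst (cor (p i)) $ k < snd (cor (p i)) $ k)" for i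
  proof -
    have "p i \<in> rects" using pW W(1) by blast
    then have "\<exists>ab. p i = cbox (fst ab) (snd ab) \<and> (\<forall>k. fst ab $ k < snd ab $ k)" unfolding rects_def by auto
    then show ?thesis unfolding cor_def by (rule someI_ex)
  qed
  define A where "A i = fst (cor (p i))" for i
  define B where "B i = snd (cor (p i))" for i
  have pAB: "p i = cbox (A i) (B i)" and AB: "\<forall>k. A i $ k < B i $ k" for i
    using corP unfolding A_def B_def by blast+
  define v where "v t j = (if even t then A (t div 2) else B (t div 2)) $ h j" for t j
  have v0: "v (2*i) j = A i $ h j" "v (Suc (2*i)) j = B i $ h j" for i j by (simp_all add: v_def)
  define lab where "lab i c = sat W V (p i) (dec c)" for i c
  have rel: "rcc8_rel (rel_of r) (p i) (p i') \<longleftrightarrow> relc d r (\<lambda>j. v (2*i) j) (\<lambda>j. v (Suc (2*i)) j) (\<lambda>j. v (2*i') j) (\<lambda>j. v (Suc (2*i')) j)"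
    if "r < 8" for r i i'
    unfolding v0 pAB[of i] pAB[of i'] by (rule rcc8_relc[OF AB AB hb that])
  have rel3: "rcc8_rel (rel_of (t - 3)) (p i) (p i') \<longleftrightarrow> relc d (t - 3) (\<lambda>j. v (2*i) j) (\<lambda>j. v (Suc (2*i)) j) (\<lambda>j. v (2*i') j) (\<lambda>j. v (Suc (2*i')) j)"
    if "3 \<le> t" "t \<le> 10" for t i i' using rel[of "t - 3" i i'] that by simp
  have wprop: "relc d (fst (prod_decode c) - 3) (\<lambda>j. v (2 * i) j) (\<lambda>j. v (Suc (2 * i)) j) (\<lambda>j. v (2 * wit x i c) j) (\<lambda>j. v (Suc (2 * wit x i c)) j) \<and>
       \<not> lab (wit x i c) (snd (prod_decode c))" if h: "i < N" "c \<le> x" "3 \<le> fst (prod_decode c) \<and> fst (prod_decode c) \<le> 10 \<and> \<not> lab i c" for i c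
  proof -
    have dm: "(i * Suc x + c) div Suc x = i" "(i * Suc x + c) mod Suc x = c" using dmod[of c "Suc x" i] h(2) by auto
    have w: "wit x i c = Suc (i * Suc x + c)" unfolding wit_def by simp
    have "p (wit x i c) \<in> W \<and> rcc8_rel (rel_of (fst (prod_decode c) - 3)) (p i) (p (wit x i c)) \<and>
        \<not> sat W V (p (wit x i c)) (dec (snd (prod_decode c)))"
      using witP[of "i * Suc x + c"] h(3) unfolding w dm lab_def by blast
    then show ?thesis
      using rel3 h(3) unfolding lab_def by blast
  qed
  have str: "STRC x N d v lab" unfolding STRC_def DEC_iff
  proof (intro conjI allI impI)
    fix i j assume "i < len x N" "j < d"
    then show "v (2 * i) j < v (Suc (2 * i)) j" using AB v0 by simp
  next
    fix i i' c assume h: "i < len x N" "i' < len x N" "\<forall>j<d. v (2 * i) j = v (2 * i') j \<and> v (Suc (2 * i)) j = v (Suc (2 * i')) j" "c \<le> x"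
    have "\<forall>k. A i $ k = A i' $ k \<and> B i $ k = B i' $ k"
      using h(3) bij_all[OF hb, where P="\<lambda>k. A i $ k = A i' $ k \<and> B i $ k = B i' $ k"] unfolding v0 by simp
    then have "p i = p i'" unfolding pAB using G5[of "A i" "B i" "A i'" "B i'"] AB less_imp_le by blast
    then show "lab i c = lab i' c" unfolding lab_def by simp
  next
    fix i c assume "i < len x N" "c \<le> x" "fst (prod_decode c) = 1"
    then show "lab i c = (\<not> lab i (snd (prod_decode c)))" unfolding lab_def by (simp add: dec1)
  next
    fix i c assume "i < len x N" "c \<le> x" "fst (prod_decode c) = 2"
    then show "lab i c = (lab i (fst (prod_decode (snd (prod_decode c)))) \<and> lab i (snd (prod_decode (snd (prod_decode c)))))"
      unfolding lab_def by (simp add: dec2)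
  next
    fix i i' c assume h: "i < len x N" "i' < len x N" "c \<le> x"
      "3 \<le> fst (prod_decode c) \<and> fst (prod_decode c) \<le> 10 \<and> lab i c \<and>
       relc d (fst (prod_decode c) - 3) (\<lambda>j. v (2 * i) j) (\<lambda>j. v (Suc (2 * i)) j) (\<lambda>j. v (2 * i') j) (\<lambda>j. v (Suc (2 * i')) j)"
    then have "rcc8_rel (rel_of (fst (prod_decode c) - 3)) (p i) (p i')" using rel3 by blast
    then show "lab i' (snd (prod_decode c))" using h(4) pW[of i'] unfolding lab_def dec3[OF conjunct1[OF h(4)] conjunct1[OF conjunct2[OF h(4)]]] by auto
  next
    fix i c assume h: "i < N" "c \<le> x" "3 \<le> fst (prod_decode c) \<and> fst (prod_decode c) \<le> 10 \<and> \<not> lab i c"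
    then show "relc d (fst (prod_decode c) - 3) (\<lambda>j. v (2 * i) j) (\<lambda>j. v (Suc (2 * i)) j) (\<lambda>j. v (2 * wit x i c) j) (\<lambda>j. v (Suc (2 * wit x i c)) j)"
      using wprop by blast
  next
    fix i c assume h: "i < N" "c \<le> x" "3 \<le> fst (prod_decode c) \<and> fst (prod_decode c) \<le> 10 \<and> \<not> lab i c"
    then show "\<not> lab (wit x i c) (snd (prod_decode c))"
      using wprop by blast
  next
    show "\<not> lab 0 x" unfolding lab_def p0 x dec_code using W(3) .
  qed
  show ?thesis using coded[OF str] unfolding d_def by blast
qed


definition bitG :: "nat \<Rightarrow> nat \<Rightarrow> bool" where "bitG G c \<longleftrightarrow> G div 2 ^ c mod 2 = 1"

definition GOOD :: "nat \<Rightarrow> bool" where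
  "GOOD x \<longleftrightarrow> (\<exists>G<2 ^ Suc x. bitG G x \<and> (\<forall>c\<le>x. bitG G c \<longrightarrow> DEC c (\<lambda>t a. t < 11 \<and>
      (t \<noteq> 0 \<longrightarrow> (t = 2 \<longrightarrow> DEC a (\<lambda>a1 a2. bitG G a1 \<and> bitG G a2)) \<and> (t \<noteq> 2 \<longrightarrow> bitG G a)))))"

definition TT :: "nat \<Rightarrow> nat \<Rightarrow> nat \<Rightarrow> bool" where
  "TT d N x \<longleftrightarrow> GOOD x \<and> \<not> (\<exists>y<BB x N ^ (BB x N * d). \<exists>z<2 ^ (len x N * Suc x).
            STRC x N d (valY (BB x N) d y) (labZ x z))"

lemma TT_rpn: "rpn 2 (\<lambda>xs. TT d (xs ! 0) (xs ! 1))"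
  unfolding TT_def GOOD_def STRC_def DEC_def relc_def len_def wit_def valY_def labZ_def bitG_def
  by (intro rf_intros; simp)

lemma code_rel_of: "r < 8 \<Longrightarrow> code_rel (rel_of r) = r"
proof -
  assume "r < 8"
  then have "r = 0 \<or> r = 1 \<or> r = 2 \<or> r = 3 \<or> r = 4 \<or> r = 5 \<or> r = 6 \<or> r = 7" by auto
  then show ?thesis by (elim disjE) (simp_all add: rel_of_def)
qed

lemma pd_eq: "c = prod_encode (fst (prod_decode c), snd (prod_decode c))"
  by (metis prod.collapse prod_decode_inverse)

lemma GOOD_sound: assumes "GOOD x" shows "x \<in> range code_fm"
proof -
  obtain G where b: "bitG G x" and cl: "\<forall>c\<le>x. bitG G c \<longrightarrow> DEC c (\<lambda>t a. t < 11 \<and>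
      (t \<noteq> 0 \<longrightarrow> (t = 2 \<longrightarrow> DEC a (\<lambda>a1 a2. bitG G a1 \<and> bitG G a2)) \<and> (t \<noteq> 2 \<longrightarrow> bitG G a)))"
    using assms unfolding GOOD_def by blast
  have "c \<le> x \<longrightarrow> bitG G c \<longrightarrow> c \<in> range code_fm" for c
  proof (induction c rule: less_induct)
    case (less c)
    show ?case
    proof (intro impI)
      assume cx: "c \<le> x" and bc: "bitG G c"
      define t where "t = fst (prod_decode c)"
      define a where "a = snd (prod_decode c)"
      have ce: "c = prod_encode (t, a)" unfolding t_def a_def by (rule pd_eq)
      have P: "t < 11" "t \<noteq> 0 \<Longrightarrow> t = 2 \<Longrightarrow> bitG G (fst (prod_decode a)) \<and> bitG G (snd (prod_decode a))"
        "t \<noteq> 0 \<Longrightarrow> t \<noteq> 2 \<Longrightarrow> bitG G a"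
        using cl cx bc unfolding DEC_iff t_def a_def by auto
      have al: "t \<noteq> 0 \<Longrightarrow> a < c" unfolding t_def a_def using pd_snd_less by blast
      have ax: "t \<noteq> 0 \<Longrightarrow> a \<le> x" using al cx by simp
      consider "t = 0" | "t = 1" | "t = 2" | "3 \<le> t" "t \<le> 10" using P(1) by linarith
      then show "c \<in> range code_fm"
      proof cases
        case 1
        then have "c = code_fm (PVar a)" using ce by simp
        then show ?thesis by blast
      next
        case 2
        then obtain \<psi> where "a = code_fm \<psi>" using less.IH[OF al] ax P(3) by auto
        then have "c = code_fm (Neg \<psi>)" using ce 2 by simp
        then show ?thesis by blast
      next
        case 3
        define a1 where "a1 = fst (prod_decode a)"
        define a2 where "a2 = snd (prod_decode a)"
        have ae: "a = prod_encode (a1, a2)" unfolding a1_def a2_def by (rule pd_eq)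
        have l: "a1 < c" "a2 < c" using al 3 pd_le_self[of a] unfolding a1_def a2_def by simp_all
        have b12: "bitG G a1" "bitG G a2" using P(2) 3 unfolding a1_def a2_def by simp_all
        have "a1 \<in> range code_fm" using less.IH[OF l(1)] l(1) cx b12(1) by simp
        moreover have "a2 \<in> range code_fm" using less.IH[OF l(2)] l(2) cx b12(2) by simp
        ultimately obtain \<psi>1 \<psi>2 where "a1 = code_fm \<psi>1" "a2 = code_fm \<psi>2" by blast
        then have "c = code_fm (Conj \<psi>1 \<psi>2)" using ce ae 3 by simp
        then show ?thesis by blast
      next
        case 4
        then obtain \<psi> where p: "a = code_fm \<psi>" using less.IH[OF al] ax P(3) by auto
        have "code_rel (rel_of (t - 3)) = t - 3" using 4 by (intro code_rel_of) simp
        then have "c = code_fm (Box (rel_of (t - 3)) \<psi>)" using ce p 4 by simp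
        then show ?thesis by blast
      qed
    qed
  qed
  then show ?thesis using b by blast
qed

lemma GOOD_complete: "GOOD (code_fm \<phi>)"
proof -
  define x where "x = code_fm \<phi>"
  define g where "g c = (if c \<in> range code_fm then 1 else 0 :: nat)" for c
  define G where "G = (\<Sum>c<Suc x. g c * 2 ^ c)"
  have gb: "\<forall>c<Suc x. g c < 2" unfolding g_def by simp
  note dg = digits[OF gb, folded G_def]
  have bit: "bitG G c \<longleftrightarrow> c \<in> range code_fm" if "c \<le> x" for c
    using dg that unfolding bitG_def g_def by auto
  have cl: "DEC c (\<lambda>t a. t < 11 \<and>
      (t \<noteq> 0 \<longrightarrow> (t = 2 \<longrightarrow> DEC a (\<lambda>a1 a2. bitG G a1 \<and> bitG G a2)) \<and> (t \<noteq> 2 \<longrightarrow> bitG G a)))"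
    if "c \<le> x" "bitG G c" for c
  proof -
    have "c \<in> range code_fm" using bit[OF that(1)] that(2) by simp
    then obtain \<psi> where c: "c = code_fm \<psi>" by blast
    show ?thesis
    proof (cases \<psi>)
      case (PVar k) then show ?thesis using c by (simp add: DEC_iff)
    next
      case (Neg \<psi>')
      have "code_fm \<psi>' \<le> x" using that c Neg code_lt by (meson order_trans)
      then show ?thesis using c Neg bit by (simp add: DEC_iff)
    next
      case (Conj \<psi>1 \<psi>2)
      have "code_fm \<psi>1 \<le> x" "code_fm \<psi>2 \<le> x" using that c Conj code_lt by (meson order_trans)+
      then show ?thesis using c Conj bit by (simp add: DEC_iff)
    next
      case (Box r \<psi>')
      have "code_fm \<psi>' \<le> x" using that c Box code_lt by (meson order_trans)
      then show ?thesis using c Box bit code_rel_less[of r] by (simp add: DEC_iff)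
    qed
  qed
  have "bitG G x" using bit[of x] by (simp add: x_def)
  moreover have "G < 2 ^ Suc x" using dg by simp
  ultimately show ?thesis unfolding GOOD_def x_def[symmetric] using cl by blast
qed

lemma char:
  "x \<in> code_fm ` logic_S_rect TYPE('n::finite) \<longleftrightarrow> (\<exists>N. TT CARD('n) N x)"
proof
  assume "x \<in> code_fm ` logic_S_rect TYPE('n)"
  then obtain \<phi> where p: "\<phi> \<in> logic_S_rect TYPE('n)" "x = code_fm \<phi>" by blast
  then have "GOOD x" using GOOD_complete by simp
  with validA[OF p] show "\<exists>N. TT CARD('n) N x" unfolding TT_def by blast
next
  assume "\<exists>N. TT CARD('n) N x"
  then obtain N where t: "TT CARD('n) N x" by blast
  then obtain \<phi> where x: "x = code_fm \<phi>" using GOOD_sound unfolding TT_def by blast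
  have "\<phi> \<in> logic_S_rect TYPE('n)"
  proof (rule ccontr)
    assume "\<phi> \<notin> logic_S_rect TYPE('n)"
    from validB[OF this x, of N] t show False unfolding TT_def by blast
  qed
  then show "x \<in> code_fm ` logic_S_rect TYPE('n)" using x by blast
qed

theorem theorem6p2:
  shows "re_fmset (logic_S_rect TYPE('n::finite))"
proof -
  have "rpn 2 (\<lambda>xs. \<not> TT CARD('n) (xs ! 0) (xs ! 1))" by (rule rpn_not[OF TT_rpn])
  then obtain t where t: "\<forall>xs. length xs = 2 \<longrightarrow> eval t xs (if \<not> TT CARD('n) (xs ! 0) (xs ! 1) then 1 else 0)"
    unfolding rpn_def rfn_def by blast
  have t2: "eval t [m, x] (if TT CARD('n) m x then 0 else 1)" for m x
  proof -
    have l: "length [m, x] = 2" by simp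
    have "eval t [m, x] (if \<not> TT CARD('n) ([m, x] ! 0) ([m, x] ! 1) then 1 else 0)" using t l by blast
    then show ?thesis by (cases "TT CARD('n) m x") simp_all
  qed
  have "x \<in> code_fm ` logic_S_rect TYPE('n) \<longleftrightarrow> (\<exists>y. eval (Mn t) [x] y)" for x
  proof
    assume "x \<in> code_fm ` logic_S_rect TYPE('n)"
    then have ex: "\<exists>N. TT CARD('n) N x" using char by blast
    define n where "n = (LEAST N. TT CARD('n) N x)"
    have tn: "TT CARD('n) n x" unfolding n_def using ex by (rule LeastI_ex)
    have lt: "\<not> TT CARD('n) m x" if "m < n" for m unfolding n_def using not_less_Least that n_def by blast
    have "eval (Mn t) [x] n"
    proof (rule eval.intros(7))
      show "eval t [n, x] 0" using t2[of n x] tn by simp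
      show "\<forall>m<n. \<exists>k. eval t [m, x] (Suc k)"
      proof (intro allI impI)
        fix m assume "m < n"
        then have "eval t [m, x] 1" using t2[of m x] lt[of m] by simp
        then show "\<exists>k. eval t [m, x] (Suc k)" by (intro exI[of _ 0]) simp
      qed
    qed
    then show "\<exists>y. eval (Mn t) [x] y" by blast
  next
    assume "\<exists>y. eval (Mn t) [x] y"
    then obtain y where "eval (Mn t) [x] y" by blast
    then have "eval t [y, x] 0" by (rule evM)
    then have "TT CARD('n) y x" using eval_det[OF t2[of y x]] by (cases "TT CARD('n) y x") auto
    then show "x \<in> code_fm ` logic_S_rect TYPE('n)" using char by blast
  qed
  then show ?thesis unfolding re_fmset_def re_set_def by blast
qed


end
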